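(* Let $n,m\in\mathbb{N}$ and $b<0$. Then $\mathcal{NN}^{\mathrm{modReLU}_b}_{n,m,2n+2m+1}$ is universal, where $\mathrm{modReLU}_b:\mathbb{C}\to\mathbb{C}$, $\mathrm{modReLU}_b(z)=(|z|+b)\frac{z}{|z|}$ if $|z|+b\ge0$ and $\mathrm{modReLU}_b(z)=0$ otherwise.
   Context: For $\varrho:\mathbb{C}\to\mathbb{C}$ and $n,m,W\in\mathbb{N}$, $\mathcal{NN}^\varrho_{n,m,W}$ denotes the set of all functions $\mathbb{C}^n\to\mathbb{C}^m$ of the form $V_L\circ\varrho^{\times W}\circ V_{L-1}\circ\cdots\circ\varrho^{\times W}\circ V_1$ with arbitrary depth $L\ge 2$, where $V_1:\mathbb{C}^n\to\mathbb{C}^W$, $V_2,\dots,V_{L-1}:\mathbb{C}^W\to\mathbb{C}^W$, $V_L:\mathbb{C}^W\to\mathbb{C}^m$ are $\mathbb{C}$-affine maps ($z\mapsto Az+b$ with complex $A,b$) and $\varrho^{\times W}$ applies $\varrho$ componentwise. A class $\mathcal{F}\subseteq C(\mathbb{C}^n;\mathbb{C}^m)$ is universal if for every $g\in C(\mathbb{C}^n;\mathbb{C}^m)$, compact $K\subseteq\mathbb{C}^n$ and $\varepsilon>0$ there is $f\in\mathcal{F}$ with $\sup_{z\in K}\|f(z)-g(z)\|<\varepsilon$. *)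

theory Defs
  imports "HOL-Analysis.Analysis"
begin

text \<open>Input space C^n is complex^'n, output space C^m is complex^'m (n = CARD('n), m = CARD('m)).
  Hidden layers of width W are represented as functions nat => complex, of which only the
  coordinates 0..<W are meaningful (affine maps set the others to 0 and only read indices < W).\<close>

definition in_affine :: "nat \<Rightarrow> (nat \<Rightarrow> 'n::finite \<Rightarrow> complex) \<Rightarrow> (nat \<Rightarrow> complex)
    \<Rightarrow> complex^'n \<Rightarrow> nat \<Rightarrow> complex" where
  "in_affine W A c = (\<lambda>x i. if i < W then (\<Sum>j\<in>UNIV. A i j * x $ j) + c i else 0)"

definition hid_affine :: "nat \<Rightarrow> (nat \<Rightarrow> nat \<Rightarrow> complex) \<Rightarrow> (nat \<Rightarrow> complex)
    \<Rightarrow> (nat \<Rightarrow> complex) \<Rightarrow> nat \<Rightarrow> complex" where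
  "hid_affine W A c = (\<lambda>z i. if i < W then (\<Sum>j<W. A i j * z j) + c i else 0)"

definition out_affine :: "nat \<Rightarrow> ('m::finite \<Rightarrow> nat \<Rightarrow> complex) \<Rightarrow> ('m \<Rightarrow> complex)
    \<Rightarrow> (nat \<Rightarrow> complex) \<Rightarrow> complex^'m" where
  "out_affine W A c = (\<lambda>z. \<chi> k. (\<Sum>j<W. A k j * z j) + c k)"

definition act :: "(complex \<Rightarrow> complex) \<Rightarrow> (nat \<Rightarrow> complex) \<Rightarrow> nat \<Rightarrow> complex" where
  "act \<rho> = (\<lambda>z i. \<rho> (z i))"

inductive_set NN_pre :: "(complex \<Rightarrow> complex) \<Rightarrow> nat \<Rightarrow> (complex^'n::finite \<Rightarrow> nat \<Rightarrow> complex) set"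
  for \<rho> :: "complex \<Rightarrow> complex" and W :: nat where
  first: "in_affine W A c \<in> NN_pre \<rho> W"
| step: "g \<in> NN_pre \<rho> W \<Longrightarrow> hid_affine W A c \<circ> act \<rho> \<circ> g \<in> NN_pre \<rho> W"

text \<open>The class NN^rho_{n,m,W}: V_L o rho o V_{L-1} o ... o rho o V_1 with L >= 2.\<close>
definition NN :: "(complex \<Rightarrow> complex) \<Rightarrow> nat \<Rightarrow> (complex^'n::finite \<Rightarrow> complex^'m::finite) set" where
  "NN \<rho> W = {out_affine W A c \<circ> act \<rho> \<circ> g | A c g. g \<in> NN_pre \<rho> W}"

definition universal :: "(complex^'n::finite \<Rightarrow> complex^'m::finite) set \<Rightarrow> bool" where
  "universal F \<longleftrightarrow> (\<forall>g. continuous_on UNIV g \<longrightarrow>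
     (\<forall>K. compact K \<longrightarrow> (\<forall>\<epsilon>>0. \<exists>f\<in>F. \<forall>z\<in>K. norm (f z - g z) < \<epsilon>)))"

definition modReLU :: "real \<Rightarrow> complex \<Rightarrow> complex" where
  "modReLU b z = (if cmod z + b \<ge> 0 then complex_of_real (cmod z + b) * (z / complex_of_real (cmod z)) else 0)"

end

theory Submission
  imports Defs
begin


lemma vec_norm_le_sum: "norm (x::complex^'m::finite) \<le> (\<Sum>i\<in>UNIV. cmod (x $ i))"
  unfolding norm_vec_def by (rule L2_set_le_sum) auto

lemma modReLU_big: "cmod z + b \<ge> 0 \<Longrightarrow> b < 0 \<Longrightarrow> modReLU b z = z + of_real b * (z / of_real (cmod z))"
proof -
  assume a: "cmod z + b \<ge> 0" "b < 0"
  then have "z \<noteq> 0" by auto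
  then have e: "of_real (cmod z) * (z / of_real (cmod z)) = z" by simp
  have "modReLU b z = of_real (cmod z + b) * (z / of_real (cmod z))" using a unfolding modReLU_def by simp
  also have "\<dots> = of_real (cmod z) * (z / of_real (cmod z)) + of_real b * (z / of_real (cmod z))"
    by (simp only: of_real_add distrib_right)
  finally show ?thesis using e by simp
qed

lemma modReLU_small: "cmod z + b < 0 \<Longrightarrow> modReLU b z = 0"
  unfolding modReLU_def by simp

lemma phase_diff: assumes "z \<noteq> 0" "w \<noteq> 0"
  shows "cmod (z / of_real (cmod z) - w / of_real (cmod w)) \<le> 2 * cmod (z - w) / cmod z"
proof -
  have e: "z / of_real (cmod z) - w / of_real (cmod w) = (z - w) / of_real (cmod z) + w * of_real (1/cmod z - 1/cmod w)"
    using assms by (simp add: field_simps)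
  have "cmod (w * of_real (1/cmod z - 1/cmod w)) = cmod w * \<bar>1/cmod z - 1/cmod w\<bar>"
    by (metis norm_mult norm_of_real)
  also have "\<dots> = \<bar>cmod w - cmod z\<bar> / cmod z" using assms by (simp add: field_simps abs_div abs_mult)
  also have "\<dots> \<le> cmod (z - w) / cmod z"
    by (rule divide_right_mono) (metis norm_triangle_ineq3 norm_minus_commute, simp)
  finally have 1: "cmod (w * of_real (1/cmod z - 1/cmod w)) \<le> cmod (z - w) / cmod z" .
  have 2: "cmod ((z - w) / of_real (cmod z)) = cmod (z - w) / cmod z" by (simp add: norm_divide)
  show ?thesis unfolding e using norm_triangle_ineq[of "(z - w) / of_real (cmod z)" "w * of_real (1/cmod z - 1/cmod w)"] 1 2
    by linarith
qed

lemma modReLU_lip: assumes "b < 0" shows "cmod (modReLU b z - modReLU b w) \<le> 3 * cmod (z - w)"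
proof (cases "cmod z + b \<ge> 0")
  case z: True
  show ?thesis
  proof (cases "cmod w + b \<ge> 0")
    case w: True
    have zn: "z \<noteq> 0" "w \<noteq> 0" using z w assms by auto
    have "modReLU b z - modReLU b w = (z - w) + of_real b * (z / of_real (cmod z) - w / of_real (cmod w))"
      using modReLU_big[OF z assms] modReLU_big[OF w assms] by (simp add: algebra_simps)
    also have "cmod \<dots> \<le> cmod (z - w) + \<bar>b\<bar> * (2 * cmod (z - w) / cmod z)"
      using norm_triangle_ineq[of "z - w"] phase_diff[OF zn] 
      by (smt (verit) abs_ge_zero mult_left_mono norm_mult norm_of_real)
    also have "\<bar>b\<bar> * (2 * cmod (z - w) / cmod z) \<le> 2 * cmod (z - w)"
    proof -
      have "\<bar>b\<bar> \<le> cmod z" using z assms by simp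
      then have "\<bar>b\<bar> / cmod z \<le> 1" using zn by simp
      then have "(\<bar>b\<bar> / cmod z) * (2 * cmod (z - w)) \<le> 1 * (2 * cmod (z - w))"
        by (rule mult_right_mono) simp
      then show ?thesis by simp
    qed
    finally show ?thesis by simp
  next
    case w: False
    have "modReLU b z = of_real (cmod z + b) * (z / of_real (cmod z))" using z unfolding modReLU_def by simp
    then have "cmod (modReLU b z) = \<bar>cmod z + b\<bar> * (cmod z / cmod z)"
      by (metis norm_mult norm_of_real norm_divide abs_norm_cancel)
    then have "cmod (modReLU b z) = cmod z + b" using z assms by (cases "z = 0") auto
    moreover have "modReLU b w = 0" using w unfolding modReLU_def by simp
    ultimately show ?thesis using w norm_triangle_ineq3[of z w] by simp
  qed
next
  case z: False
  show ?thesis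
  proof (cases "cmod w + b \<ge> 0")
    case w: True
    have "modReLU b w = of_real (cmod w + b) * (w / of_real (cmod w))" using w unfolding modReLU_def by simp
    then have "cmod (modReLU b w) = \<bar>cmod w + b\<bar> * (cmod w / cmod w)"
      by (metis norm_mult norm_of_real norm_divide abs_norm_cancel)
    then have "cmod (modReLU b w) = cmod w + b" using w assms by (cases "w = 0") auto
    moreover have "modReLU b z = 0" using z unfolding modReLU_def by simp
    ultimately show ?thesis using z norm_triangle_ineq3[of w z] by (simp add: norm_minus_commute)
  next
    case False
    then show ?thesis using z unfolding modReLU_def by simp
  qed
qed


definition dW :: "nat \<Rightarrow> (nat\<Rightarrow>complex) \<Rightarrow> (nat\<Rightarrow>complex) \<Rightarrow> real" where
  "dW W u v = (\<Sum>i<W. cmod (u i - v i))"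

definition Good :: "real \<Rightarrow> nat \<Rightarrow> (complex^'n::finite) set \<Rightarrow> (complex^'n \<Rightarrow> nat \<Rightarrow> complex) \<Rightarrow> bool" where
  "Good b W K h \<longleftrightarrow> (\<forall>e>0. \<exists>g\<in>NN_pre (modReLU b) W. \<forall>x\<in>K. dW W (g x) (h x) < e)"

lemma dW_ge: "j < W \<Longrightarrow> cmod (u j - v j) \<le> dW W u v"
  unfolding dW_def by (rule member_le_sum) auto

lemma dW_nonneg: "0 \<le> dW W u v" unfolding dW_def by (simp add: sum_nonneg)

lemma lin_lip:
  assumes "b < 0"
  shows "cmod ((\<Sum>j<W. a j * act (modReLU b) u j) - (\<Sum>j<W. a j * act (modReLU b) v j))
     \<le> (3 * (\<Sum>j<W. cmod (a j))) * dW W u v"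
proof -
  have "cmod ((\<Sum>j<W. a j * act (modReLU b) u j) - (\<Sum>j<W. a j * act (modReLU b) v j))
     = cmod (\<Sum>j<W. a j * (modReLU b (u j) - modReLU b (v j)))"
    by (simp add: act_def sum_subtractf algebra_simps)
  also have "\<dots> \<le> (\<Sum>j<W. cmod (a j * (modReLU b (u j) - modReLU b (v j))))"
    by (rule norm_sum)
  also have "\<dots> \<le> (\<Sum>j<W. cmod (a j) * (3 * dW W u v))"
  proof (rule sum_mono)
    fix j assume "j \<in> {..<W}"
    then have "cmod (modReLU b (u j) - modReLU b (v j)) \<le> 3 * dW W u v"
      using modReLU_lip[OF assms, of "u j" "v j"] dW_ge[of j W u v] by simp
    then show "cmod (a j * (modReLU b (u j) - modReLU b (v j))) \<le> cmod (a j) * (3 * dW W u v)"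
      by (simp add: norm_mult mult_left_mono)
  qed
  also have "\<dots> = (3 * (\<Sum>j<W. cmod (a j))) * dW W u v"
    by (simp add: sum_distrib_right sum_distrib_left algebra_simps)
  finally show ?thesis .
qed

lemma step_lip:
  assumes "b < 0"
  shows "dW W (hid_affine W A c (act (modReLU b) u)) (hid_affine W A c (act (modReLU b) v))
     \<le> (\<Sum>i<W. 3 * (\<Sum>j<W. cmod (A i j))) * dW W u v"
proof -
  have "dW W (hid_affine W A c (act (modReLU b) u)) (hid_affine W A c (act (modReLU b) v))
    = (\<Sum>i<W. cmod ((\<Sum>j<W. A i j * act (modReLU b) u j) - (\<Sum>j<W. A i j * act (modReLU b) v j)))"
    unfolding dW_def hid_affine_def by (intro sum.cong) auto
  also have "\<dots> \<le> (\<Sum>i<W. (3 * (\<Sum>j<W. cmod (A i j))) * dW W u v)"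
    by (rule sum_mono) (rule lin_lip[OF assms])
  also have "\<dots> = (\<Sum>i<W. 3 * (\<Sum>j<W. cmod (A i j))) * dW W u v"
    by (simp add: sum_distrib_right)
  finally show ?thesis .
qed

lemma good_cong: "Good b W K h \<Longrightarrow> (\<And>x. x \<in> K \<Longrightarrow> h x = h' x) \<Longrightarrow> Good b W K h'"
  unfolding Good_def by metis

lemma good_step:
  assumes "b < 0" "Good b W K h"
  shows "Good b W K (\<lambda>x. hid_affine W A c (act (modReLU b) (h x)))"
  unfolding Good_def
proof (intro allI impI)
  fix e :: real assume e: "e > 0"
  define L where "L = (\<Sum>i<W. 3 * (\<Sum>j<W. cmod (A i j))) + 1"
  have L0: "L > 0" unfolding L_def by (smt (verit) norm_ge_zero sum_nonneg)
  obtain g where g: "g \<in> NN_pre (modReLU b) W" "\<forall>x\<in>K. dW W (g x) (h x) < e / L"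
    using assms(2) e L0 unfolding Good_def by (meson divide_pos_pos)
  show "\<exists>g\<in>NN_pre (modReLU b) W. \<forall>x\<in>K. dW W (g x) (hid_affine W A c (act (modReLU b) (h x))) < e"
  proof (intro bexI ballI)
    show "hid_affine W A c \<circ> act (modReLU b) \<circ> g \<in> NN_pre (modReLU b) W"
      by (rule NN_pre.step[OF g(1)])
    fix x assume x: "x \<in> K"
    have "dW W ((hid_affine W A c \<circ> act (modReLU b) \<circ> g) x) (hid_affine W A c (act (modReLU b) (h x)))
       \<le> (L - 1) * dW W (g x) (h x)"
      using step_lip[OF assms(1), of W A c "g x" "h x"] unfolding L_def by simp
    also have "\<dots> \<le> (L - 1) * (e / L)"
      using g(2) x L0 by (intro mult_left_mono) (auto simp: L_def sum_nonneg less_imp_le)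
    also have "\<dots> < e" using L0 e by (simp add: field_simps)
    finally show "dW W ((hid_affine W A c \<circ> act (modReLU b) \<circ> g) x) (hid_affine W A c (act (modReLU b) (h x))) < e" .
  qed
qed

lemma good_out:
  assumes "b < 0" "Good b W K h" "e > 0"
  shows "\<exists>f\<in>(NN (modReLU b) W :: (complex^'n::finite \<Rightarrow> complex^'m::finite) set).
           \<forall>x\<in>K. norm (f x - out_affine W A c (act (modReLU b) (h x))) < e"
proof -
  define L where "L = (\<Sum>k\<in>(UNIV::'m set). 3 * (\<Sum>j<W. cmod (A k j))) + 1"
  have L0: "L > 0" unfolding L_def by (smt (verit) norm_ge_zero sum_nonneg)
  obtain g where g: "g \<in> NN_pre (modReLU b) W" "\<forall>x\<in>K. dW W (g x) (h x) < e / L"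
    using assms(2,3) L0 unfolding Good_def by (meson divide_pos_pos)
  have lip: "norm (out_affine W A c (act (modReLU b) u) - out_affine W A c (act (modReLU b) v)) \<le> (L - 1) * dW W u v" for u v
  proof -
    have "norm (out_affine W A c (act (modReLU b) u) - out_affine W A c (act (modReLU b) v))
       \<le> (\<Sum>k\<in>UNIV. cmod ((out_affine W A c (act (modReLU b) u) - out_affine W A c (act (modReLU b) v)) $ k))"
      by (rule vec_norm_le_sum)
    also have "\<dots> = (\<Sum>k\<in>UNIV. cmod ((\<Sum>j<W. A k j * act (modReLU b) u j) - (\<Sum>j<W. A k j * act (modReLU b) v j)))"
      unfolding out_affine_def by simp
    also have "\<dots> \<le> (\<Sum>k\<in>(UNIV::'m set). (3 * (\<Sum>j<W. cmod (A k j))) * dW W u v)"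
      by (rule sum_mono) (rule lin_lip[OF assms(1)])
    also have "\<dots> = (L - 1) * dW W u v" unfolding L_def by (simp add: sum_distrib_right)
    finally show ?thesis .
  qed
  show ?thesis
  proof (intro bexI ballI)
    show "out_affine W A c \<circ> act (modReLU b) \<circ> g \<in> (NN (modReLU b) W :: (complex^'n \<Rightarrow> complex^'m) set)"
      unfolding NN_def using g(1) by blast
    fix x assume x: "x \<in> K"
    have "norm ((out_affine W A c \<circ> act (modReLU b) \<circ> g) x - out_affine W A c (act (modReLU b) (h x)))
       \<le> (L - 1) * dW W (g x) (h x)" using lip by simp
    also have "\<dots> \<le> (L - 1) * (e / L)"
      using g(2) x L0 by (intro mult_left_mono) (auto simp: L_def sum_nonneg less_imp_le)
    also have "\<dots> < e" using L0 assms(3) by (simp add: field_simps)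
    finally show "norm ((out_affine W A c \<circ> act (modReLU b) \<circ> g) x - out_affine W A c (act (modReLU b) (h x))) < e" .
  qed
qed


definition encv :: "real \<Rightarrow> real \<Rightarrow> nat set \<Rightarrow> (nat\<Rightarrow>real) \<Rightarrow> nat \<Rightarrow> real" where
  "encv B r S u i = (if i \<in> S then (r/B) * u i + r else u i + B + r)"

definition enc :: "nat \<Rightarrow> real \<Rightarrow> real \<Rightarrow> nat set \<Rightarrow> (nat \<Rightarrow> real) \<Rightarrow> nat \<Rightarrow> complex" where
  "enc W B r S u i = (if i < W then of_real (encv B r S u i) else 0)"

definition reluS :: "nat set \<Rightarrow> (nat \<Rightarrow> real) \<Rightarrow> nat \<Rightarrow> real" where
  "reluS S u k = (if k \<in> S then max (u k) 0 else u k)"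

definition upd :: "nat \<Rightarrow> real \<Rightarrow> (nat \<Rightarrow> real) \<Rightarrow> nat \<Rightarrow> (nat \<Rightarrow> real) \<Rightarrow> nat \<Rightarrow> real" where
  "upd j \<alpha> coef W v = v(j := \<alpha> + (\<Sum>k<W. coef k * v k))"

lemma modReLU_real: assumes "p \<ge> 0" "b < 0" shows "modReLU b (of_real p) = of_real (if p + b \<ge> 0 then p + b else 0)"
proof (cases "p = 0")
  case True then show ?thesis using assms by (simp add: modReLU_def)
next
  case False
  then have "p > 0" using assms by simp
  then show ?thesis unfolding modReLU_def by simp
qed

lemma rho_encv:
  assumes "b < 0" "r = -b" "B > 0" "\<bar>u k\<bar> \<le> B"
  shows "modReLU b (of_real (encv B r S u k)) = of_real (if k \<in> S then (r/B) * max (u k) 0 else u k + B)"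
proof (cases "k \<in> S")
  case True
  have r0: "r > 0" using assms by simp
  have rb: "r/B \<ge> 0" using r0 assms(3) by simp
  have "(r/B) * \<bar>u k\<bar> \<le> (r/B) * B" using mult_left_mono[OF assms(4) rb] .
  then have h: "(r/B) * \<bar>u k\<bar> \<le> r" using assms by simp
  have p0: "(r/B) * u k + r \<ge> 0"
    using h abs_ge_self[of "- u k"] r0 assms(3)
    by (smt (verit, best) abs_minus_cancel abs_of_nonneg abs_of_nonpos divide_pos_pos mult_minus_right mult_nonneg_nonneg)
  show ?thesis
  proof (cases "u k \<ge> 0")
    case True
    then have "(r/B) * u k \<ge> 0" using r0 assms(3) by simp
    then show ?thesis using \<open>k \<in> S\<close> modReLU_real[OF p0 assms(1)] assms True by (simp add: encv_def)
  next
    case False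
    then have "(r/B) * u k < 0" using r0 assms(3) by (simp add: mult_pos_neg divide_neg_pos)
    then show ?thesis using \<open>k \<in> S\<close> modReLU_real[OF p0 assms(1)] assms False by (simp add: encv_def)
  qed
next
  case False
  have p0: "u k + B + r \<ge> 0" using assms by simp
  then show ?thesis using False modReLU_real[OF p0 assms(1)] assms by (simp add: encv_def)
qed

lemma sum_delta_nat: "i < (W::nat) \<Longrightarrow> (\<Sum>k<W. (if k = i then x else 0) * z k) = (x * z i :: real)"
proof -
  assume "i < W"
  have "(\<Sum>k<W. (if k = i then x else 0) * z k) = (\<Sum>k<W. (if k = i then x * z i else 0))"
    by (intro sum.cong) auto
  also have "\<dots> = x * z i" using \<open>i < W\<close> by (subst sum.delta) simp_all
  finally show ?thesis .
qed

lemma layer: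
  assumes "b < 0" "r = -b" "B > 0"
  shows "\<exists>A c. \<forall>u. (\<forall>k<W. \<bar>u k\<bar> \<le> B) \<longrightarrow>
     hid_affine W A c (act (modReLU b) (enc W B r S u)) = enc W B r S' (upd j \<alpha> coef W (reluS S u))"
proof -
  have r0: "r > 0" using assms by simp
  define s where "s i = (if i \<in> S' then r/B else 1)" for i
  define e where "e i = (if i \<in> S' then r else B + r)" for i
  define d where "d k = (if k \<in> S then B/r else 1)" for k
  define f where "f k = (if k \<in> S then 0 else B)" for k
  define Ar where "Ar i k = (if i = j then s i * coef k * d k else if k = i then s i * d i else 0)" for i k
  define cr where "cr i = (if i = j then s i * (\<alpha> - (\<Sum>k<W. coef k * f k)) + e i else - s i * f i + e i)" for i
  have encv_eq: "encv B r S' v i = s i * v i + e i" for v i unfolding encv_def s_def e_def by auto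
  show ?thesis
  proof (intro exI allI impI)
    fix u :: "nat \<Rightarrow> real" assume ub: "\<forall>k<W. \<bar>u k\<bar> \<le> B"
    define zr where "zr k = (if k \<in> S then (r/B) * max (u k) 0 else u k + B)" for k
    have z: "act (modReLU b) (enc W B r S u) k = of_real (zr k)" if "k < W" for k
      using rho_encv[OF assms, of u k S] ub that unfolding act_def enc_def zr_def by simp
    have ut: "reluS S u k = d k * zr k - f k" for k
      unfolding reluS_def d_def zr_def f_def using r0 assms(3) by auto
    show "hid_affine W (\<lambda>i k. of_real (Ar i k)) (\<lambda>i. of_real (cr i)) (act (modReLU b) (enc W B r S u))
        = enc W B r S' (upd j \<alpha> coef W (reluS S u))"
    proof
      fix i
      show "hid_affine W (\<lambda>i k. of_real (Ar i k)) (\<lambda>i. of_real (cr i)) (act (modReLU b) (enc W B r S u)) i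
        = enc W B r S' (upd j \<alpha> coef W (reluS S u)) i"
      proof (cases "i < W")
        case False then show ?thesis by (simp add: hid_affine_def enc_def)
      next
        case iW: True
        have "(\<Sum>k<W. complex_of_real (Ar i k) * act (modReLU b) (enc W B r S u) k)
            = of_real (\<Sum>k<W. Ar i k * zr k)" using z by simp
        then have lhs: "hid_affine W (\<lambda>i k. of_real (Ar i k)) (\<lambda>i. of_real (cr i)) (act (modReLU b) (enc W B r S u)) i
            = of_real ((\<Sum>k<W. Ar i k * zr k) + cr i)" using iW by (simp add: hid_affine_def)
        show ?thesis
        proof (cases "i = j")
          case True
          have "(\<Sum>k<W. Ar i k * zr k) + cr i = s i * (\<alpha> + (\<Sum>k<W. coef k * (d k * zr k - f k))) + e i"
            using True by (simp add: Ar_def cr_def sum_distrib_left sum_subtractf algebra_simps)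
          then show ?thesis using lhs iW True by (simp add: enc_def encv_eq upd_def ut)
        next
          case False
          have "(\<Sum>k<W. Ar i k * zr k) = s i * d i * zr i"
            using sum_delta_nat[OF iW, of "s i * d i" zr] False by (simp add: Ar_def)
          then have "(\<Sum>k<W. Ar i k * zr k) + cr i = s i * (d i * zr i - f i) + e i"
            using False by (simp add: cr_def algebra_simps)
          then show ?thesis using lhs iW False by (simp add: enc_def encv_eq upd_def ut)
        qed
      qed
    qed
  qed
qed


datatype macro = MSet nat real | MMin real real nat | MMax nat

lemma sum_two_nat:
  assumes "i < (W::nat)" "T < W" "i \<noteq> T"
  shows "(\<Sum>k<W. (if k = i then p else if k = T then q else 0) * v k) = p * v i + q * (v T :: real)"
proof -
  have "(\<Sum>k<W. (if k = i then p else if k = T then q else 0) * v k)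
      = (\<Sum>k<W. (if k = i then p * v i else 0) + (if k = T then q * v T else 0))"
    using assms by (intro sum.cong) auto
  also have "\<dots> = p * v i + q * v T" using assms by (simp add: sum.distrib)
  finally show ?thesis .
qed

locale netsetup =
  fixes b r B B0 :: real and W T :: nat and K :: "(complex^'n::finite) set"
  assumes b0: "b < 0" and rb: "r = -b" and B0pos: "B0 > 0" and BB0: "2 * B0 \<le> B" and TW: "T < W" and Kne: "K \<noteq> {}"
begin

lemma Bpos: "B > 0" using B0pos BB0 by simp

fun msem :: "macro \<Rightarrow> (nat \<Rightarrow> real) \<Rightarrow> nat \<Rightarrow> real" where
  "msem (MSet j v) u = u(j := v)"
| "msem (MMin \<alpha> \<beta> i) u = u(T := min (u T) (\<alpha> + \<beta> * u i))"
| "msem (MMax j) u = u(j := max (u j) (u T))"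

fun ok_m :: "macro \<Rightarrow> (nat \<Rightarrow> real) \<Rightarrow> bool" where
  "ok_m (MSet j v) u = (j < W \<and> \<bar>v\<bar> \<le> B0)"
| "ok_m (MMin \<alpha> \<beta> i) u = (i < W \<and> i \<noteq> T \<and> \<bar>\<alpha> + \<beta> * u i\<bar> \<le> B0)"
| "ok_m (MMax j) u = (j < W \<and> j \<noteq> T)"

definition inv :: "(nat \<Rightarrow> real) \<Rightarrow> bool" where
  "inv u \<longleftrightarrow> (\<forall>k<W. \<bar>u k\<bar> \<le> B0)"

lemma inv_msem: assumes "inv u" "ok_m m u" shows "inv (msem m u)"
proof -
  have uT: "\<bar>u T\<bar> \<le> B0" using assms(1) TW by (simp add: inv_def)
  show ?thesis using assms uT by (cases m) (auto simp: inv_def abs_le_iff)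
qed

abbreviation E :: "nat set \<Rightarrow> (nat \<Rightarrow> real) \<Rightarrow> nat \<Rightarrow> complex" where
  "E S u \<equiv> enc W B r S u"

lemma good_layer:
  assumes "Good b W K (\<lambda>x. E S (u x))" "\<forall>x\<in>K. \<forall>k<W. \<bar>u x k\<bar> \<le> B"
  shows "Good b W K (\<lambda>x. E S' (upd j \<alpha> coef W (reluS S (u x))))"
proof -
  obtain A c where Ac: "\<forall>u. (\<forall>k<W. \<bar>u k\<bar> \<le> B) \<longrightarrow>
     hid_affine W A c (act (modReLU b) (E S u)) = E S' (upd j \<alpha> coef W (reluS S u))"
    using layer[OF b0 rb Bpos] by blast
  show ?thesis
    using good_step[OF b0 assms(1), of A c] by (rule good_cong) (use Ac assms(2) in auto)
qed

lemma good_msem: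
  assumes g: "Good b W K (\<lambda>x. E {} (u x))" and iv: "\<forall>x\<in>K. inv (u x) \<and> ok_m m (u x)"
  shows "Good b W K (\<lambda>x. E {} (msem m (u x)))"
proof -
  have bB: "\<forall>x\<in>K. \<forall>k<W. \<bar>u x k\<bar> \<le> B" using iv BB0 B0pos unfolding inv_def by fastforce
  have r0: "reluS {} v = v" for v by (rule ext) (simp add: reluS_def)
  show ?thesis
  proof (cases m)
    case (MSet j v)
    have "Good b W K (\<lambda>x. E {} (upd j v (\<lambda>_. 0) W (reluS {} (u x))))"
      by (rule good_layer[OF g bB])
    then show ?thesis by (rule good_cong) (simp add: MSet upd_def r0)
  next
    case (MMin \<alpha> \<beta> i)
    have i: "i < W" "i \<noteq> T" using iv MMin Kne by auto
    define cf where "cf k = (if k = i then \<beta> else if k = T then -1 else 0 :: real)" for k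
    have sm: "(\<Sum>k<W. cf k * v k) = \<beta> * v i - v T" for v
      unfolding cf_def using sum_two_nat[OF i(1) TW i(2), of \<beta> "-1" v] by simp
    define u1 where "u1 x = upd T \<alpha> cf W (reluS {} (u x))" for x
    have u1: "u1 x = (u x)(T := \<alpha> + \<beta> * u x i - u x T)" for x
      unfolding u1_def upd_def r0 sm by (simp add: algebra_simps)
    have g1: "Good b W K (\<lambda>x. E {T} (u1 x))" unfolding u1_def by (rule good_layer[OF g bB])
    have b1: "\<forall>x\<in>K. \<forall>k<W. \<bar>u1 x k\<bar> \<le> B"
    proof (intro ballI allI impI)
      fix x k assume x: "x \<in> K" and k: "k < W"
      have "\<bar>\<alpha> + \<beta> * u x i\<bar> \<le> B0" "\<bar>u x T\<bar> \<le> B0" "\<bar>u x k\<bar> \<le> B0"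
        using iv x MMin TW k by (auto simp: inv_def)
      then show "\<bar>u1 x k\<bar> \<le> B" unfolding u1 using BB0 by auto
    qed
    have "Good b W K (\<lambda>x. E {} (upd T \<alpha> cf W (reluS {T} (u1 x))))"
      by (rule good_layer[OF g1 b1])
    then show ?thesis
    proof (rule good_cong)
      fix x
      have "reluS {T} (u1 x) = (u x)(T := max (\<alpha> + \<beta> * u x i - u x T) 0)"
        unfolding u1 by (auto simp: reluS_def)
      then show "E {} (upd T \<alpha> cf W (reluS {T} (u1 x))) = E {} (msem m (u x))"
        using i by (simp add: MMin upd_def sm min_def max_def)
    qed
  next
    case (MMax j)
    have j: "j < W" "j \<noteq> T" using iv MMax Kne by auto
    define cf where "cf k = (if k = j then 1 else if k = T then -1 else 0 :: real)" for k
    have sm: "(\<Sum>k<W. cf k * v k) = v j - v T" for v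
      unfolding cf_def using sum_two_nat[OF j(1) TW j(2), of 1 "-1" v] by simp
    define cf2 where "cf2 k = (if k = j then 1 else if k = T then 1 else 0 :: real)" for k
    have sm2: "(\<Sum>k<W. cf2 k * v k) = v j + v T" for v
      unfolding cf2_def using sum_two_nat[OF j(1) TW j(2), of 1 "1" v] by simp
    define u1 where "u1 x = upd j 0 cf W (reluS {} (u x))" for x
    have u1: "u1 x = (u x)(j := u x j - u x T)" for x
      unfolding u1_def upd_def r0 sm by simp
    have g1: "Good b W K (\<lambda>x. E {j} (u1 x))" unfolding u1_def by (rule good_layer[OF g bB])
    have b1: "\<forall>x\<in>K. \<forall>k<W. \<bar>u1 x k\<bar> \<le> B"
    proof (intro ballI allI impI)
      fix x k assume x: "x \<in> K" and k: "k < W"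
      have "\<bar>u x j\<bar> \<le> B0" "\<bar>u x T\<bar> \<le> B0" "\<bar>u x k\<bar> \<le> B0"
        using iv x j TW k by (auto simp: inv_def)
      then show "\<bar>u1 x k\<bar> \<le> B" unfolding u1 using BB0 by auto
    qed
    have "Good b W K (\<lambda>x. E {} (upd j 0 cf2 W (reluS {j} (u1 x))))"
      by (rule good_layer[OF g1 b1])
    then show ?thesis
    proof (rule good_cong)
      fix x
      have "reluS {j} (u1 x) = (u x)(j := max (u x j - u x T) 0)"
        unfolding u1 by (auto simp: reluS_def)
      then show "E {} (upd j 0 cf2 W (reluS {j} (u1 x))) = E {} (msem m (u x))"
        using j by (simp add: MMax upd_def sm2 max_def)
    qed
  qed
qed

fun ok_list :: "macro list \<Rightarrow> (nat \<Rightarrow> real) \<Rightarrow> bool" where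
  "ok_list [] u = True"
| "ok_list (m # ms) u = (ok_m m u \<and> ok_list ms (msem m u))"

definition mrun :: "macro list \<Rightarrow> (nat \<Rightarrow> real) \<Rightarrow> nat \<Rightarrow> real" where
  "mrun ms u = foldl (\<lambda>v m. msem m v) u ms"

lemma mrun_simps[simp]: "mrun [] u = u" "mrun (m # ms) u = mrun ms (msem m u)"
  "mrun (ms1 @ ms2) u = mrun ms2 (mrun ms1 u)"
  by (simp_all add: mrun_def)

lemma ok_list_append: "ok_list (ms1 @ ms2) u \<longleftrightarrow> ok_list ms1 u \<and> ok_list ms2 (mrun ms1 u)"
  by (induction ms1 arbitrary: u) auto

lemma good_mrun:
  assumes "Good b W K (\<lambda>x. E {} (u x))" "\<forall>x\<in>K. inv (u x) \<and> ok_list ms (u x)"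
  shows "Good b W K (\<lambda>x. E {} (mrun ms (u x))) \<and> (\<forall>x\<in>K. inv (mrun ms (u x)))"
  using assms
proof (induction ms arbitrary: u)
  case Nil then show ?case by simp
next
  case (Cons m ms)
  have "Good b W K (\<lambda>x. E {} (msem m (u x)))" using good_msem Cons.prems by auto
  moreover have "\<forall>x\<in>K. inv (msem m (u x)) \<and> ok_list ms (msem m (u x))"
    using Cons.prems inv_msem by auto
  ultimately show ?case using Cons.IH[of "\<lambda>x. msem m (u x)"] by simp
qed

end


definition ph :: "complex \<Rightarrow> complex" where "ph v = (1 + v) / of_real (cmod (1 + v))"

lemma ph_approx:
  assumes "cmod v \<le> 1/2"
  shows "cmod (ph v - 1 - \<i> * of_real (Im v)) \<le> 3 * (cmod v)^2"
proof -
  define a where "a = Re v"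
  define t where "t = Im v"
  define N where "N = cmod (1 + v)"
  have va: "\<bar>a\<bar> \<le> cmod v" unfolding a_def by (rule abs_Re_le_cmod)
  have vt: "\<bar>t\<bar> \<le> cmod v" unfolding t_def by (rule abs_Im_le_cmod)
  have a1: "1 + a \<ge> 1/2" using va assms by linarith
  have N2: "N^2 = (1 + a)^2 + t^2" unfolding N_def a_def t_def cmod_power2 by simp
  have N0: "N \<ge> 0" unfolding N_def by simp
  have "(1 + a)^2 \<le> N^2" using N2 by simp
  then have Nge: "N \<ge> 1 + a" using N0 by (rule power2_le_imp_le)
  have "(N - (1 + a)) * (N + (1 + a)) = N^2 - (1 + a)^2" by (simp add: power2_eq_square algebra_simps)
  then have "(N - (1 + a)) * (N + (1 + a)) = t^2" using N2 by simp
  moreover have "N + (1 + a) \<ge> 1" using Nge a1 by linarith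
  moreover have "N - (1 + a) \<ge> 0" using Nge by simp
  ultimately have "(N - (1 + a)) * 1 \<le> t^2"
    by (metis mult_left_mono)
  then have e1: "N - (1 + a) \<le> t^2" by simp
  have t2: "t^2 \<le> (cmod v)^2" using vt by (metis abs_ge_zero power2_abs power_mono)
  have Npos: "N > 0" using Nge a1 by linarith
  define p where "p = ph v"
  have p: "p * of_real N = 1 + v" unfolding p_def ph_def N_def using Npos N_def by simp
  have pn: "cmod p = 1" unfolding p_def ph_def using Npos N_def by (simp add: norm_divide)
  have v: "v = of_real a + \<i> * of_real t" unfolding a_def t_def by (simp add: complex_eq)
  have key: "p - 1 - \<i> * of_real t = of_real a * (1 - p) - of_real (N - (1 + a)) * p"
  proof -
    have "of_real a * (1 - p) - of_real (N - (1 + a)) * p = of_real a - (p * of_real N) + p"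
      by (simp add: algebra_simps)
    also have "\<dots> = p - 1 - \<i> * of_real t" using p v by simp
    finally show ?thesis by simp
  qed
  have p1: "cmod (p - 1) \<le> 2 * cmod v"
  proof -
    have "cmod (p - 1) = cmod ((p - (1 + v)) + v)" by simp
    moreover have "cmod (p - (1 + v)) = \<bar>1 - N\<bar>"
    proof -
      have "p - (1 + v) = p * of_real (1 - N)" using p by (simp add: algebra_simps)
      then show ?thesis using pn by (metis norm_mult norm_of_real of_real_1 of_real_diff mult_1)
    qed
    moreover have "\<bar>1 - N\<bar> \<le> cmod v" unfolding N_def
      using norm_triangle_ineq3[of "1 + v" 1] by (simp add: abs_minus_commute)
    ultimately show ?thesis using norm_triangle_ineq[of "p - (1 + v)" v] by linarith
  qed
  have "cmod (p - 1 - \<i> * of_real t) \<le> \<bar>a\<bar> * cmod (1 - p) + \<bar>N - (1 + a)\<bar> * cmod p"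
    unfolding key using norm_triangle_ineq4[of "of_real a * (1 - p)" "of_real (N - (1 + a)) * p"]
    by (simp only: norm_mult norm_of_real)
  also have "\<dots> \<le> cmod v * (2 * cmod v) + (cmod v)^2"
  proof -
    have "\<bar>a\<bar> * cmod (1 - p) \<le> cmod v * (2 * cmod v)"
      using va p1 by (simp add: norm_minus_commute mult_mono)
    moreover have "\<bar>N - (1 + a)\<bar> * cmod p \<le> (cmod v)^2" using pn Nge e1 t2 by simp
    ultimately show ?thesis by linarith
  qed
  finally show ?thesis unfolding p_def t_def by (simp add: power2_eq_square)
qed

lemma modReLU_shift:
  assumes "b < 0" "r = -b" "C > 0" "C \<ge> cmod w + r"
  shows "modReLU b (of_real C + w) = of_real C + w - of_real r * ph (w / of_real C)"
proof -
  have "cmod (of_real C + w) \<ge> C - cmod w" using norm_diff_ineq[of "of_real C" w] assms(3) by simp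
  then have big: "cmod (of_real C + w) + b \<ge> 0" using assms by simp
  have "of_real C + w = of_real C * (1 + w / of_real C)" using assms(3) by (simp add: field_simps)
  then have "(of_real C + w) / of_real (cmod (of_real C + w)) = ph (w / of_real C)"
    unfolding ph_def using assms(3) by (simp add: norm_mult)
  then show ?thesis using modReLU_big[OF big assms(1)] assms(2) by simp
qed


lemma extract_est:
  assumes b: "b < 0" "r = -b" and C: "C \<ge> r" "C \<ge> 2 * R" "C \<ge> R + r" and w: "cmod w \<le> R"
  defines "z1 \<equiv> modReLU b (of_real C + w)" and "z2 \<equiv> modReLU b (of_real (2*C) + w)"
  defines "I \<equiv> of_real (2*C/r) * (z2 - z1 - of_real C)"
  shows "cmod (- \<i> * I - of_real (Im w)) \<le> 8 * R^2 / C"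
    and "cmod (z1 - of_real C + of_real r + of_real (r/C - 1) * I - of_real (Re w)) \<le> 11 * R^2 / C"
proof -
  have r0: "r > 0" using b by simp
  have C0: "C > 0" using r0 C by simp
  define v1 where "v1 = w / of_real C"
  define v2 where "v2 = w / of_real (2*C)"
  define t where "t = Im w"
  define E1 where "E1 = ph v1 - 1 - \<i> * of_real (Im v1)"
  define E2 where "E2 = ph v2 - 1 - \<i> * of_real (Im v2)"
  have nv1: "cmod v1 = cmod w / C" unfolding v1_def using C0 by (simp add: norm_divide)
  have nv2: "cmod v2 = cmod w / (2*C)" unfolding v2_def using C0 by (simp add: norm_divide)
  have R0: "R \<ge> 0" using w norm_ge_zero order_trans by blast
  have "cmod w / C \<le> 1/2" using C w C0 by (simp add: field_simps)
  then have E1b: "cmod E1 \<le> 3 * (cmod w / C)^2" unfolding E1_def using ph_approx[of v1] nv1 by simp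
  have "cmod w / (2*C) \<le> 1/2" using C w C0 by (simp add: field_simps)
  then have E2b: "cmod E2 \<le> 3 * (cmod w / (2*C))^2" unfolding E2_def using ph_approx[of v2] nv2 by simp
  have Iv1: "Im v1 = t / C" unfolding v1_def t_def by (simp add: Im_divide_of_real)
  have Iv2: "Im v2 = t / (2*C)" unfolding v2_def t_def by (simp add: Im_divide_of_real)
  have z1e: "z1 = of_real C + w - of_real r * (1 + \<i> * of_real (t / C) + E1)"
    unfolding z1_def using modReLU_shift[OF b C0, of w] C w unfolding E1_def v1_def[symmetric] Iv1
    by (simp add: v1_def)
  have z2e: "z2 = of_real (2*C) + w - of_real r * (1 + \<i> * of_real (t / (2*C)) + E2)"
    unfolding z2_def using modReLU_shift[OF b, of "2*C" w] C0 C w unfolding E2_def v2_def[symmetric] Iv2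
    by (simp add: v2_def)
  have Ie: "I = \<i> * of_real t + of_real (2*C) * (E1 - E2)"
  proof -
    have "z2 - z1 - of_real C = of_real r * (\<i> * of_real (t / (2*C)) + E1 - E2)"
      unfolding z1e z2e by (simp add: algebra_simps of_real_divide)
    then have "I = of_real (2*C/r) * of_real r * (\<i> * of_real (t / (2*C)) + E1 - E2)"
      unfolding I_def by (simp add: mult.assoc)
    also have "of_real (2*C/r) * of_real r = (of_real (2*C) :: complex)" using r0 by (simp add: of_real_divide)
    also have "of_real (2*C) * (\<i> * of_real (t / (2*C)) + E1 - E2) = \<i> * of_real t + of_real (2*C) * (E1 - E2)"
      using C0 by (simp add: algebra_simps of_real_divide)
    finally show ?thesis .
  qed
  have Eb: "cmod E1 \<le> 3 * R^2 / C^2" "cmod E2 \<le> 3 * R^2 / (4 * C^2)"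
  proof -
    have "(cmod w / C)^2 \<le> (R / C)^2" using w C0 by (intro power_mono divide_right_mono) auto
    then show "cmod E1 \<le> 3 * R^2 / C^2" using E1b by (simp add: power_divide)
    have "(cmod w / (2*C))^2 \<le> (R / (2*C))^2" using w C0 by (intro power_mono divide_right_mono) auto
    then show "cmod E2 \<le> 3 * R^2 / (4 * C^2)" using E2b by (simp add: power_divide power_mult_distrib)
  qed
  have EE: "cmod (E1 - E2) \<le> 15/4 * R^2 / C^2"
    using norm_triangle_ineq4[of E1 E2] Eb by (simp add: field_simps)
  show "cmod (- \<i> * I - of_real (Im w)) \<le> 8 * R^2 / C"
  proof -
    have "- \<i> * I - of_real (Im w) = - \<i> * (of_real (2*C) * (E1 - E2))"
      unfolding Ie t_def by (simp add: algebra_simps)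
    then have "cmod (- \<i> * I - of_real (Im w)) = 2 * C * cmod (E1 - E2)"
      using C0 by (simp add: norm_mult)
    also have "\<dots> \<le> 2 * C * (15/4 * R^2 / C^2)" using EE C0 by (intro mult_left_mono) auto
    also have "\<dots> = 15/2 * R^2 / C" using C0 by (simp add: power2_eq_square field_simps)
    also have "\<dots> \<le> 8 * R^2 / C" using C0 by (intro divide_right_mono) auto
    finally show ?thesis .
  qed
  show "cmod (z1 - of_real C + of_real r + of_real (r/C - 1) * I - of_real (Re w)) \<le> 11 * R^2 / C"
  proof -
    have wd: "w = of_real (Re w) + \<i> * of_real t" unfolding t_def by (simp add: complex_eq)
    have "z1 - of_real C + of_real r + of_real (r/C - 1) * I - of_real (Re w)
        = - (of_real r * E1) + of_real (2*r - 2*C) * (E1 - E2)"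
    proof -
      have "z1 - of_real C + of_real r + of_real (r/C - 1) * I - of_real (Re w)
         = w - of_real (Re w) - \<i> * of_real t - of_real r * E1
           + (of_real (r/C) * (\<i> * of_real t) - of_real r * (\<i> * of_real (t / C)))
           + of_real (r/C - 1) * (of_real (2*C) * (E1 - E2))"
        unfolding z1e Ie by (simp add: algebra_simps)
      also have "of_real (r/C) * (\<i> * of_real t) - of_real r * (\<i> * of_real (t / C)) = (0::complex)"
        by (simp add: of_real_divide)
      also have "w - of_real (Re w) - \<i> * of_real t = 0" using wd by (metis add_diff_cancel_left' diff_self)
      also have "of_real (r/C - 1) * (of_real (2*C) * (E1 - E2)) = of_real (2*r - 2*C) * (E1 - E2)"
        using C0 by (simp add: of_real_divide field_simps)
      finally show ?thesis by simp
    qed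
    also have "cmod \<dots> \<le> r * cmod E1 + (2*C - 2*r) * cmod (E1 - E2)"
    proof -
      have "cmod (of_real (2*r - 2*C) :: complex) = 2*C - 2*r" using C by (simp only: norm_of_real)
      then show ?thesis
        using norm_triangle_ineq[of "- (of_real r * E1)" "of_real (2*r - 2*C) * (E1 - E2)"] r0
        by (simp only: norm_mult norm_minus_cancel norm_of_real)
    qed
    also have "\<dots> \<le> C * (3 * R^2 / C^2) + (2*C) * (15/4 * R^2 / C^2)"
      using Eb EE r0 C C0 by (intro add_mono mult_mono) auto
    also have "\<dots> = 21/2 * R^2 / C" using C0 by (simp add: power2_eq_square field_simps)
    also have "\<dots> \<le> 11 * R^2 / C" using C0 by (intro divide_right_mono) auto
    finally show ?thesis .
  qed
qed


definition y0 :: "nat \<Rightarrow> (nat \<Rightarrow> 'n::finite) \<Rightarrow> complex^'n \<Rightarrow> nat \<Rightarrow> real" where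
  "y0 n en x i = (if i < 2*n then (if even i then Re (x $ en (i div 2)) else Im (x $ en (i div 2))) else 0)"

lemma sum_two_c:
  assumes "i < (W::nat)" "T < W" "i \<noteq> T"
  shows "(\<Sum>k<W. (if k = i then p else if k = T then q else 0) * v k) = p * v i + q * (v T :: complex)"
proof -
  have "(\<Sum>k<W. (if k = i then p else if k = T then q else 0) * v k)
      = (\<Sum>k<W. (if k = i then p * v i else 0) + (if k = T then q * v T else 0))"
    using assms by (intro sum.cong) auto
  also have "\<dots> = p * v i + q * v T" using assms by (simp add: sum.distrib)
  finally show ?thesis .
qed

lemma good_init:
  assumes b: "b < 0" "r = -b" and B: "B > 0" and nW: "2*n \<le> W" and R: "R \<ge> 0"
    and K: "\<forall>x\<in>K. \<forall>jj<n. cmod (x $ en jj) \<le> R"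
  shows "Good b W K (\<lambda>x. enc W B r {} (y0 n en x))"
  unfolding Good_def
proof (intro allI impI)
  fix e :: real assume e: "e > 0"
  have r0: "r > 0" using b by simp
  define Cx where "Cx = 2*R + r + 11 * real W * R^2 / e + 1"
  have d: "11 * real W * R^2 / e \<ge> 0" using e by simp
  have Cx: "Cx \<ge> r" "Cx \<ge> 2*R" "Cx \<ge> R + r" "Cx > 0" using d R r0 unfolding Cx_def
    by linarith+
  have Cxe: "real W * (11 * R^2 / Cx) < e"
  proof -
    have "11 * real W * R^2 / e < Cx" unfolding Cx_def using R r0 by simp
    then have "11 * real W * R^2 < e * Cx" using e by (simp add: field_simps)
    then show ?thesis using Cx(4) by (simp add: field_simps)
  qed
  define A0 :: "nat \<Rightarrow> 'a \<Rightarrow> complex" where "A0 i q = (if i < 2*n \<and> q = en (i div 2) then 1 else 0)" for i q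
  define c0 :: "nat \<Rightarrow> complex" where "c0 i = (if i < 2*n then (if even i then of_real Cx else of_real (2*Cx)) else 0)" for i
  define \<kappa> :: complex where "\<kappa> = of_real ((r/Cx - 1) * (2*Cx/r))"
  define lam :: complex where "lam = of_real (2*Cx/r)"
  define al where "al i = (if even i then 1 - \<kappa> else \<i> * lam)" for i :: nat
  define be where "be i = (if even i then \<kappa> else - \<i> * lam)" for i :: nat
  define ga where "ga i = (if i < 2*n then (if even i then - \<kappa> * of_real Cx - of_real Cx + of_real r else \<i> * lam * of_real Cx) else 0) + of_real (B + r)" for i :: nat
  define A1 where "A1 i k = (if i < 2*n then (if k = 2*(i div 2) then al i else if k = 2*(i div 2)+1 then be i else 0) else 0)" for i k :: nat
  define g where "g = hid_affine W A1 ga \<circ> act (modReLU b) \<circ> in_affine W A0 c0"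
  show "\<exists>g\<in>NN_pre (modReLU b) W. \<forall>x\<in>K. dW W (g x) (enc W B r {} (y0 n en x)) < e"
  proof (intro bexI ballI)
    show "g \<in> NN_pre (modReLU b) W" unfolding g_def by (intro NN_pre.step NN_pre.first)
    fix x assume x: "x \<in> K"
    have inv: "in_affine W A0 c0 x k = (if k < 2*n then x $ en (k div 2) + (if even k then of_real Cx else of_real (2*Cx)) else 0)"
      if "k < W" for k
    proof -
      have "(\<Sum>q\<in>UNIV. A0 k q * x $ q) = (if k < 2*n then x $ en (k div 2) else 0)"
        unfolding A0_def by (simp add: if_distrib[of "\<lambda>a. a * _"] sum.delta cong: if_cong)
      then show ?thesis using that unfolding in_affine_def c0_def by simp
    qed
    have err: "cmod (g x i - enc W B r {} (y0 n en x) i) \<le> 11 * R^2 / Cx" if i: "i < W" for i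
    proof (cases "i < 2*n")
      case False
      have "g x i = of_real (B + r)" using i False unfolding g_def hid_affine_def A1_def ga_def by simp
      moreover have "enc W B r {} (y0 n en x) i = of_real (B + r)"
        using i False unfolding enc_def encv_def y0_def by simp
      ultimately show ?thesis using Cx(4) by simp
    next
      case True
      define jj where "jj = i div 2"
      have jjn: "jj < n" using True unfolding jj_def by linarith
      then have jj: "jj < n" "2*jj < W" "2*jj+1 < W" "2*jj \<noteq> 2*jj+1" using nW by auto
      define w where "w = x $ en jj"
      have w: "cmod w \<le> R" using K x jj unfolding w_def by auto
      define z1 where "z1 = modReLU b (of_real Cx + w)"
      define z2 where "z2 = modReLU b (of_real (2*Cx) + w)"
      have zz1: "act (modReLU b) (in_affine W A0 c0 x) (2*jj) = z1"
        using inv[OF jj(2)] jj unfolding act_def z1_def w_def by (simp add: add.commute)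
      have zz2: "act (modReLU b) (in_affine W A0 c0 x) (2*jj+1) = z2"
        using inv[OF jj(3)] jj unfolding act_def z2_def w_def by (simp add: add.commute)
      have gx: "g x i = al i * z1 + be i * z2 + ga i"
      proof -
        have "g x i = (\<Sum>k<W. A1 i k * act (modReLU b) (in_affine W A0 c0 x) k) + ga i"
          using i unfolding g_def hid_affine_def by simp
        also have "(\<Sum>k<W. A1 i k * act (modReLU b) (in_affine W A0 c0 x) k)
           = (\<Sum>k<W. (if k = 2*jj then al i else if k = 2*jj+1 then be i else 0) * act (modReLU b) (in_affine W A0 c0 x) k)"
          unfolding A1_def jj_def using True by simp
        also have "\<dots> = al i * z1 + be i * z2"
          using sum_two_c[OF jj(2) jj(3) jj(4)] zz1 zz2 by simp
        finally show ?thesis .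
      qed
      define I where "I = of_real (2*Cx/r) * (z2 - z1 - of_real Cx)"
      note est = extract_est[OF b Cx(1) Cx(2) Cx(3) w, folded z1_def z2_def, folded I_def]
      show ?thesis
      proof (cases "even i")
        case ev: True
        have "g x i - enc W B r {} (y0 n en x) i = z1 - of_real Cx + of_real r + of_real (r/Cx - 1) * I - of_real (Re w)"
        proof -
          have alg: "(1 - p*q)*z1 + p*q*z2 + (- (p*q)*c - c + rr + d) = z1 - c + rr + p*(q*(z2 - z1 - c)) + d"
            for p q c rr d :: complex by (simp add: algebra_simps)
          have "g x i = (1 - \<kappa>)*z1 + \<kappa> * z2 + (- \<kappa> * of_real Cx - of_real Cx + of_real r + of_real (B+r))"
            unfolding gx al_def be_def ga_def using ev True by simp
          also have "\<kappa> = of_real (r/Cx - 1) * of_real (2*Cx/r)" unfolding \<kappa>_def by (simp only: of_real_mult)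
          finally have "g x i = z1 - of_real Cx + of_real r + of_real (r/Cx - 1) * (of_real (2*Cx/r) * (z2 - z1 - of_real Cx)) + of_real (B + r)"
            by (simp only: alg)
          then have "g x i = z1 - of_real Cx + of_real r + of_real (r/Cx - 1) * I + of_real (B + r)"
            unfolding I_def .
          moreover have "enc W B r {} (y0 n en x) i = of_real (Re w + B + r)"
            using i True ev unfolding enc_def encv_def y0_def w_def jj_def by simp
          ultimately show ?thesis by simp
        qed
        then show ?thesis using est(2) by simp
      next
        case od: False
        have "g x i - enc W B r {} (y0 n en x) i = - \<i> * I - of_real (Im w)"
        proof -
          have alg: "\<i> * l * z1 + - \<i> * l * z2 + (\<i> * l * c + d) = - \<i> * (l * (z2 - z1 - c)) + d"
            for l c d :: complex by (simp add: algebra_simps)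
          have "g x i = \<i> * lam * z1 + - \<i> * lam * z2 + (\<i> * lam * of_real Cx + of_real (B + r))"
            unfolding gx al_def be_def ga_def using od True by simp
          then have "g x i = - \<i> * I + of_real (B + r)"
            unfolding I_def lam_def by (simp only: alg)
          moreover have "enc W B r {} (y0 n en x) i = of_real (Im w + B + r)"
            using i True od unfolding enc_def encv_def y0_def w_def jj_def by simp
          ultimately show ?thesis by simp
        qed
        then show ?thesis using est(1) Cx(4) R
          by (smt (verit) divide_right_mono zero_le_power2)
      qed
    qed
    have "dW W (g x) (enc W B r {} (y0 n en x)) \<le> (\<Sum>i<W. 11 * R^2 / Cx)"
      unfolding dW_def by (rule sum_mono) (use err in auto)
    also have "\<dots> = real W * (11 * R^2 / Cx)" by simp
    finally show "dW W (g x) (enc W B r {} (y0 n en x)) < e" using Cxe by linarith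
  qed
qed


lemma foldl_min_le: "foldl min a xs \<le> (a::real)"
proof (induction xs arbitrary: a)
  case (Cons x xs) then show ?case using order_trans[OF Cons.IH[of "min a x"] min.cobounded1] by simp
qed simp
lemma foldl_min_le_mem: "x \<in> set xs \<Longrightarrow> foldl min a xs \<le> (x::real)"
proof (induction xs arbitrary: a)
  case (Cons y xs) then show ?case using order_trans[OF foldl_min_le[of "min a y" xs] min.cobounded2] by auto
qed simp
lemma foldl_min_ge: "c \<le> a \<Longrightarrow> \<forall>x\<in>set xs. c \<le> x \<Longrightarrow> c \<le> foldl min a (xs::real list)"
  by (induction xs arbitrary: a) auto
lemma foldl_max_ge: "a \<le> foldl max a (xs::real list)"
proof (induction xs arbitrary: a)
  case (Cons x xs) then show ?case using order_trans[OF max.cobounded1 Cons.IH[of "max a x"]] by simp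
qed simp
lemma foldl_max_ge_mem: "x \<in> set xs \<Longrightarrow> (x::real) \<le> foldl max a xs"
proof (induction xs arbitrary: a)
  case (Cons y xs) then show ?case using order_trans[OF max.cobounded2 foldl_max_ge[of "max a y" xs]] by auto
qed simp
lemma foldl_max_le: "a \<le> c \<Longrightarrow> \<forall>x\<in>set xs. x \<le> c \<Longrightarrow> foldl max a (xs::real list) \<le> c"
  by (induction xs arbitrary: a) auto

context netsetup
begin

fun writes :: "macro \<Rightarrow> nat" where
  "writes (MSet j v) = j" | "writes (MMin \<alpha> \<beta> i) = T" | "writes (MMax j) = j"

lemma msem_keep: "k \<noteq> writes m \<Longrightarrow> msem m u k = u k"
  by (cases m) auto

lemma mrun_keep: "\<forall>m\<in>set ms. writes m \<noteq> k \<Longrightarrow> mrun ms u k = u k"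
  by (induction ms arbitrary: u) (auto simp: msem_keep)

fun rd_ok :: "nat \<Rightarrow> macro \<Rightarrow> bool" where
  "rd_ok NI (MMin \<alpha> \<beta> i) = (i < NI)" | "rd_ok NI _ = True"

lemma ok_m_inputs: "rd_ok NI m \<Longrightarrow> \<forall>k<NI. u k = u' k \<Longrightarrow> ok_m m u = ok_m m u'"
  by (cases m) auto

lemma ok_list_inputs:
  assumes "\<forall>m\<in>set ms. NI \<le> writes m \<and> rd_ok NI m \<and> ok_m m u"
  shows "ok_list ms u"
  using assms
proof (induction ms arbitrary: u)
  case Nil then show ?case by simp
next
  case (Cons m ms)
  have "\<forall>k<NI. msem m u k = u k" using Cons.prems by (auto intro!: msem_keep)
  then have "\<forall>m'\<in>set ms. NI \<le> writes m' \<and> rd_ok NI m' \<and> ok_m m' (msem m u)"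
    using Cons.prems ok_m_inputs by (metis list.set_intros(2))
  then show ?case using Cons by simp
qed

fun mval :: "macro \<Rightarrow> (nat \<Rightarrow> real) \<Rightarrow> real" where
  "mval (MMin \<alpha> \<beta> i) u = \<alpha> + \<beta> * u i" | "mval _ u = 0"

fun is_min :: "macro \<Rightarrow> bool" where
  "is_min (MMin \<alpha> \<beta> i) = (i \<noteq> T)" | "is_min _ = False"

lemma mrun_mins:
  assumes "\<forall>m\<in>set ms. is_min m"
  shows "mrun ms u = u(T := foldl min (u T) (map (\<lambda>m. mval m u) ms))"
  using assms
proof (induction ms arbitrary: u)
  case Nil then show ?case by simp
next
  case (Cons m ms)
  obtain \<alpha> \<beta> i where m: "m = MMin \<alpha> \<beta> i" "i \<noteq> T" using Cons.prems by (cases m) auto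
  define u1 where "u1 = u(T := min (u T) (\<alpha> + \<beta> * u i))"
  have "mrun (m # ms) u = mrun ms u1" using m by (simp add: u1_def)
  also have "\<dots> = u1(T := foldl min (u1 T) (map (\<lambda>m. mval m u1) ms))"
    by (rule Cons.IH) (use Cons.prems in simp)
  also have "map (\<lambda>m. mval m u1) ms = map (\<lambda>m. mval m u) ms"
  proof (rule map_cong[OF refl])
    fix m' assume "m' \<in> set ms"
    then have im: "is_min m'" using Cons.prems by simp
    from im show "mval m' u1 = mval m' u" by (cases m') (auto simp: u1_def)
  qed
  finally show ?case using m by (simp add: u1_def fun_eq_iff)
qed

end

locale netprog = netsetup +
  fixes NI :: nat and L :: real
  assumes NIT: "NI \<le> T"
begin

definition mins :: "real \<Rightarrow> (nat \<Rightarrow> real) \<Rightarrow> macro list" where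
  "mins G cv = concat (map (\<lambda>i. [MMin (G + L * cv i) (-L) i, MMin (G - L * cv i) L i]) [0..<NI])"

definition coneval :: "real \<Rightarrow> (nat \<Rightarrow> real) \<Rightarrow> (nat \<Rightarrow> real) \<Rightarrow> real" where
  "coneval G cv y = foldl min G (concat (map (\<lambda>i. [G - L * (y i - cv i), G + L * (y i - cv i)]) [0..<NI]))"

definition block :: "nat \<Rightarrow> real \<times> (nat \<Rightarrow> real) \<Rightarrow> macro list" where
  "block q d = [MSet T (fst d)] @ mins (fst d) (snd d) @ [MMax q]"

definition blocks :: "nat \<Rightarrow> (real \<times> (nat \<Rightarrow> real)) list \<Rightarrow> macro list" where
  "blocks q Ds = concat (map (block q) Ds)"

definition prog :: "real \<Rightarrow> nat list \<Rightarrow> (nat \<Rightarrow> (real \<times> (nat \<Rightarrow> real)) list) \<Rightarrow> macro list" where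
  "prog B1 os D = map (\<lambda>q. MSet q (-B1)) os @ concat (map (\<lambda>q. blocks q (D q)) os)"

lemma mins_is_min: "NI \<le> T \<Longrightarrow> \<forall>m\<in>set (mins G cv). is_min m"
  unfolding mins_def by auto

lemma mins_val: "map (\<lambda>m. mval m u) (mins G cv) = concat (map (\<lambda>i. [G - L * (u i - cv i), G + L * (u i - cv i)]) [0..<NI])"
  unfolding mins_def by (simp add: map_concat comp_def algebra_simps)

lemma block_sem:
  assumes "q \<noteq> T" "\<forall>i<NI. u i = y i"
  shows "mrun (block q d) u = (u(T := coneval (fst d) (snd d) y))(q := max (u q) (coneval (fst d) (snd d) y))"
proof -
  define u1 where "u1 = u(T := fst d)"
  have "mrun (mins (fst d) (snd d)) u1 = u1(T := foldl min (u1 T) (map (\<lambda>m. mval m u1) (mins (fst d) (snd d))))"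
    by (rule mrun_mins[OF mins_is_min[OF NIT]])
  also have "map (\<lambda>m. mval m u1) (mins (fst d) (snd d)) = concat (map (\<lambda>i. [fst d - L * (y i - snd d i), fst d + L * (y i - snd d i)]) [0..<NI])"
    unfolding mins_val using assms NIT by (auto simp: u1_def intro!: arg_cong[where f=concat])
  also have "u1(T := foldl min (u1 T) (concat (map (\<lambda>i. [fst d - L * (y i - snd d i), fst d + L * (y i - snd d i)]) [0..<NI])))
     = u(T := coneval (fst d) (snd d) y)" unfolding u1_def coneval_def by simp
  finally have "mrun (mins (fst d) (snd d)) u1 = u(T := coneval (fst d) (snd d) y)" .
  then show ?thesis unfolding block_def using assms(1) by (simp add: u1_def)
qed

lemma block_writes: "m \<in> set (block q d) \<Longrightarrow> writes m = T \<or> writes m = q"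
  unfolding block_def mins_def by auto

lemma blocks_sem:
  assumes "q \<noteq> T" "\<forall>i<NI. u i = y i" "NI \<le> q"
  shows "mrun (blocks q Ds) u q = foldl max (u q) (map (\<lambda>d. coneval (fst d) (snd d) y) Ds)
     \<and> (\<forall>k. k \<noteq> q \<and> k \<noteq> T \<longrightarrow> mrun (blocks q Ds) u k = u k)"
  using assms(2)
proof (induction Ds arbitrary: u)
  case Nil then show ?case by (simp add: blocks_def)
next
  case (Cons d Ds)
  define u1 where "u1 = mrun (block q d) u"
  have u1: "u1 = (u(T := coneval (fst d) (snd d) y))(q := max (u q) (coneval (fst d) (snd d) y))"
    unfolding u1_def by (rule block_sem[OF assms(1) Cons.prems])
  have "\<forall>i<NI. u1 i = y i" using Cons.prems assms NIT unfolding u1 by auto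
  note IH = Cons.IH[OF this]
  have eq: "mrun (blocks q (d # Ds)) u = mrun (blocks q Ds) u1" by (simp add: blocks_def u1_def)
  have u1q: "u1 q = max (u q) (coneval (fst d) (snd d) y)" unfolding u1 by simp
  have u1k: "u1 k = u k" if "k \<noteq> q" "k \<noteq> T" for k unfolding u1 using that by simp
  show ?case unfolding eq using IH u1q u1k by simp
qed

lemma blocks_writes: "m \<in> set (blocks q Ds) \<Longrightarrow> writes m = T \<or> writes m = q"
  unfolding blocks_def using block_writes by auto

lemma allblocks_sem:
  assumes "distinct os" "\<forall>q\<in>set os. q \<noteq> T \<and> NI \<le> q" "\<forall>i<NI. u i = y i"
  shows "\<forall>k\<in>set os. mrun (concat (map (\<lambda>q. blocks q (D q)) os)) u k
           = foldl max (u k) (map (\<lambda>d. coneval (fst d) (snd d) y) (D k))"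
  using assms
proof (induction os arbitrary: u)
  case Nil then show ?case by simp
next
  case (Cons q os)
  define u1 where "u1 = mrun (blocks q (D q)) u"
  have s1: "u1 q = foldl max (u q) (map (\<lambda>d. coneval (fst d) (snd d) y) (D q))"
    "\<forall>k. k \<noteq> q \<and> k \<noteq> T \<longrightarrow> u1 k = u k"
    using blocks_sem[of q u y "D q"] Cons.prems unfolding u1_def by auto
  have in1: "\<forall>i<NI. u1 i = y i" using s1(2) Cons.prems NIT by (metis le_less_trans less_irrefl list.set_intros(1) not_le)
  have IH: "\<forall>k\<in>set os. mrun (concat (map (\<lambda>q. blocks q (D q)) os)) u1 k
           = foldl max (u1 k) (map (\<lambda>d. coneval (fst d) (snd d) y) (D k))"
    using Cons.IH[of u1] Cons.prems in1 by simp
  have eq: "mrun (concat (map (\<lambda>q. blocks q (D q)) (q # os))) u = mrun (concat (map (\<lambda>q. blocks q (D q)) os)) u1"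
    by (simp add: u1_def)
  show ?case
  proof
    fix k assume k: "k \<in> set (q # os)"
    show "mrun (concat (map (\<lambda>q. blocks q (D q)) (q # os))) u k = foldl max (u k) (map (\<lambda>d. coneval (fst d) (snd d) y) (D k))"
    proof (cases "k = q")
      case True
      have "\<forall>m\<in>set (concat (map (\<lambda>q. blocks q (D q)) os)). writes m \<noteq> q"
        using blocks_writes Cons.prems by fastforce
      then show ?thesis unfolding eq using mrun_keep s1(1) True by simp
    next
      case False
      then have "k \<in> set os" "k \<noteq> T" using k Cons.prems by auto
      then show ?thesis unfolding eq using IH s1(2) False by simp
    qed
  qed
qed

lemma init_sem: "\<forall>k\<in>set os. mrun (map (\<lambda>q. MSet q v) os) u k = v"
proof (induction os arbitrary: u rule: rev_induct)
  case Nil then show ?case by simp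
next
  case (snoc q os)
  then show ?case by auto
qed

lemma init_keep: "k \<notin> set os \<Longrightarrow> mrun (map (\<lambda>q. MSet q v) os) u k = u k"
  by (rule mrun_keep) auto

lemma prog_sem:
  assumes "distinct os" "\<forall>q\<in>set os. q \<noteq> T \<and> NI \<le> q" "\<forall>i<NI. u i = y i"
  shows "\<forall>k\<in>set os. mrun (prog B1 os D) u k = foldl max (-B1) (map (\<lambda>d. coneval (fst d) (snd d) y) (D k))"
proof -
  define u1 where "u1 = mrun (map (\<lambda>q. MSet q (-B1)) os) u"
  have "\<forall>i<NI. u1 i = y i" unfolding u1_def using init_keep assms(2,3) by (metis not_le)
  then have "\<forall>k\<in>set os. mrun (concat (map (\<lambda>q. blocks q (D q)) os)) u1 k
           = foldl max (u1 k) (map (\<lambda>d. coneval (fst d) (snd d) y) (D k))"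
    using allblocks_sem assms(1,2) by blast
  then show ?thesis unfolding prog_def using init_sem u1_def by simp
qed

lemma prog_ok:
  assumes "\<forall>q\<in>set os. q \<noteq> T \<and> NI \<le> q \<and> q < W" "\<bar>B1\<bar> \<le> B0" "NI \<le> T"
    and "\<forall>q\<in>set os. \<forall>d\<in>set (D q). \<bar>fst d\<bar> \<le> B0 \<and> (\<forall>i<NI. \<bar>fst d + L * snd d i - L * u i\<bar> \<le> B0 \<and> \<bar>fst d - L * snd d i + L * u i\<bar> \<le> B0)"
  shows "ok_list (prog B1 os D) u"
proof (rule ok_list_inputs[where NI=NI])
  show "\<forall>m\<in>set (prog B1 os D). NI \<le> writes m \<and> rd_ok NI m \<and> ok_m m u"
  proof
    fix m assume "m \<in> set (prog B1 os D)"
    then consider (a) q where "q \<in> set os" "m = MSet q (-B1)"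
      | (b) q d where "q \<in> set os" "d \<in> set (D q)" "m \<in> set (block q d)"
      unfolding prog_def blocks_def by auto
    then show "NI \<le> writes m \<and> rd_ok NI m \<and> ok_m m u"
    proof cases
      case a then show ?thesis using assms by auto
    next
      case b
      have d: "\<bar>fst d\<bar> \<le> B0" "\<forall>i<NI. \<bar>fst d + L * snd d i - L * u i\<bar> \<le> B0 \<and> \<bar>fst d - L * snd d i + L * u i\<bar> \<le> B0"
        using assms(4) b by auto
      have q: "q \<noteq> T" "NI \<le> q" "q < W" using assms(1) b by auto
      from b(3) consider "m = MSet T (fst d)" | "m = MMax q" | "m \<in> set (mins (fst d) (snd d))"
        unfolding block_def by auto
      then show ?thesis
      proof cases
        case 3
        then obtain i where i: "i < NI" "m = MMin (fst d + L * snd d i) (-L) i \<or> m = MMin (fst d - L * snd d i) L i"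
          unfolding mins_def by auto
        have "i < W" "i \<noteq> T" using i(1) assms(3) TW by auto
        then show ?thesis using i d(2) assms(3) by (auto simp: algebra_simps)
      qed (use d q TW NIT in auto)
    qed
  qed
qed

end


lemma out_exact:
  assumes b: "b < 0" "r = -b" and B: "B > 0" and ub: "\<forall>k<W. \<bar>u k\<bar> \<le> B"
    and o: "\<forall>k. oR k < W \<and> oI k < W \<and> oR k \<noteq> oI k"
  shows "out_affine W (\<lambda>k j. if j = oR k then 1 else if j = oI k then \<i> else 0)
           (\<lambda>k. - (of_real B + \<i> * of_real B)) (act (modReLU b) (enc W B r {} u))
         = (\<chi> k. Complex (u (oR k)) (u (oI k)) :: complex^'m::finite)"
proof -
  have z: "act (modReLU b) (enc W B r {} u) j = of_real (u j + B)" if "j < W" for j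
    using rho_encv[OF b B, of u j "{}"] ub that unfolding act_def enc_def by simp
  show ?thesis
  proof (rule vec_eq_iff[THEN iffD2], rule allI)
    fix k :: 'm
    have "(\<Sum>j<W. (if j = oR k then 1 else if j = oI k then \<i> else 0) * act (modReLU b) (enc W B r {} u) j)
      = 1 * act (modReLU b) (enc W B r {} u) (oR k) + \<i> * act (modReLU b) (enc W B r {} u) (oI k)"
      using sum_two_c[of "oR k" W "oI k"] o by blast
    also have "\<dots> = of_real (u (oR k) + B) + \<i> * of_real (u (oI k) + B)" using z o by simp
    finally show "out_affine W (\<lambda>k j. if j = oR k then 1 else if j = oI k then \<i> else 0)
           (\<lambda>k. - (of_real B + \<i> * of_real B)) (act (modReLU b) (enc W B r {} u)) $ k
         = (\<chi> k. Complex (u (oR k)) (u (oI k))) $ k"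
      unfolding out_affine_def by (simp add: complex_eq_iff)
  qed
qed

lemma y0_diff_le:
  assumes "i < 2*n"
  shows "\<bar>y0 n en x i - y0 n en c i\<bar> \<le> norm (x - c)"
proof -
  have "\<bar>y0 n en x i - y0 n en c i\<bar> \<le> cmod ((x - c) $ en (i div 2))"
    using assms unfolding y0_def
    by (auto simp: abs_Re_le_cmod[of "x $ en (i div 2) - c $ en (i div 2)", simplified]
                   abs_Im_le_cmod[of "x $ en (i div 2) - c $ en (i div 2)", simplified])
  also have "\<dots> \<le> norm (x - c)" by (rule Finite_Cartesian_Product.norm_nth_le)
  finally show ?thesis .
qed

lemma norm_lt_y0:
  assumes en: "bij_betw en {0..<n} (UNIV :: 'n::finite set)" and n: "n > 0" and d: "d > 0"
    and h: "\<forall>i<2*n. \<bar>y0 n en x i - y0 n en c i\<bar> < d / (2*n)"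
  shows "norm (x - c) < d"
proof -
  have "norm (x - c) \<le> (\<Sum>q\<in>UNIV. cmod ((x - c) $ q))" by (rule vec_norm_le_sum)
  also have "\<dots> = (\<Sum>jj\<in>{0..<n}. cmod ((x - c) $ en jj))"
    using sum.reindex_bij_betw[OF en, of "\<lambda>q. cmod ((x - c) $ q)"] by simp
  also have "\<dots> < (\<Sum>jj\<in>{0..<n}. 2 * (d / (2*n)))"
  proof (rule sum_strict_mono)
    show "finite {0..<n}" by simp
    show "{0..<n} \<noteq> {}" using n by simp
    fix jj assume jj: "jj \<in> {0..<n}"
    have "\<bar>Re ((x - c) $ en jj)\<bar> < d / (2*n)"
      using h[rule_format, of "2*jj"] jj unfolding y0_def by simp
    moreover have "\<bar>Im ((x - c) $ en jj)\<bar> < d / (2*n)"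
      using h[rule_format, of "2*jj+1"] jj unfolding y0_def by simp
    ultimately show "cmod ((x - c) $ en jj) < 2 * (d / (2*n))"
      using cmod_le[of "(x - c) $ en jj"] by linarith
  qed
  also have "\<dots> = d" using n by simp
  finally show ?thesis .
qed

context netprog
begin

lemma cone_le: "coneval G cv y \<le> G"
  unfolding coneval_def by (rule foldl_min_le)

lemma cone_le_i: assumes "i < NI" "L \<ge> 0" shows "coneval G cv y \<le> G - L * \<bar>y i - cv i\<bar>"
proof -
  have mem: "G - L * (y i - cv i) \<in> set (concat (map (\<lambda>i. [G - L * (y i - cv i), G + L * (y i - cv i)]) [0..<NI]))"
    "G + L * (y i - cv i) \<in> set (concat (map (\<lambda>i. [G - L * (y i - cv i), G + L * (y i - cv i)]) [0..<NI]))"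
    using assms by auto
  show ?thesis
  proof (cases "y i - cv i \<ge> 0")
    case True then show ?thesis using foldl_min_le_mem[OF mem(1)] unfolding coneval_def by simp
  next
    case False then show ?thesis using foldl_min_le_mem[OF mem(2), of G] unfolding coneval_def by (simp add: abs_if algebra_simps)
  qed
qed

lemma cone_ge: assumes "L \<ge> 0" "\<forall>i<NI. \<bar>y i - cv i\<bar> \<le> D" "D \<ge> 0" shows "G - L * D \<le> coneval G cv y"
  unfolding coneval_def
proof (rule foldl_min_ge)
  show "G - L * D \<le> G" using assms by (simp add: mult_nonneg_nonneg)
  show "\<forall>x\<in>set (concat (map (\<lambda>i. [G - L * (y i - cv i), G + L * (y i - cv i)]) [0..<NI])). G - L * D \<le> x"
  proof
    fix z assume "z \<in> set (concat (map (\<lambda>i. [G - L * (y i - cv i), G + L * (y i - cv i)]) [0..<NI]))"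
    then obtain i where i: "i < NI" "z = G - L * (y i - cv i) \<or> z = G + L * (y i - cv i)" by auto
    have "L * \<bar>y i - cv i\<bar> \<le> L * D" using assms i by (simp add: mult_left_mono)
    moreover have "L * (y i - cv i) \<le> L * \<bar>y i - cv i\<bar>" "- (L * (y i - cv i)) \<le> L * \<bar>y i - cv i\<bar>"
      using assms(1) by (simp_all add: mult_left_mono flip: mult_minus_right)
    ultimately show "G - L * D \<le> z" using i by auto
  qed
qed

lemma cone_approx:
  fixes \<phi> :: "complex^'a \<Rightarrow> real" and en :: "nat \<Rightarrow> 'a"
  assumes en: "bij_betw en {0..<n} UNIV" and n: "n > 0" and NI: "NI = 2*n"
    and \<delta>: "\<delta> > 0" and e: "e > 0" and Mg: "Mg > 0" and L: "L = 4 * real n * Mg / \<delta>"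
    and \<delta>2: "\<delta>2 \<le> \<delta>" "\<delta>2 \<le> e / L"
    and phib: "\<forall>x\<in>K. \<bar>\<phi> x\<bar> \<le> Mg" and B0: "B0 \<ge> Mg"
    and uc: "\<forall>x\<in>K. \<forall>c\<in>K. norm (x - c) < \<delta> \<longrightarrow> \<bar>\<phi> c - \<phi> x\<bar> < e"
    and cs: "set cs \<subseteq> K" "K \<subseteq> (\<Union>c\<in>set cs. ball c \<delta>2)"
    and x: "x \<in> K"
  shows "\<bar>foldl max (-B0) (map (\<lambda>c. coneval (\<phi> c) (y0 n en c) (y0 n en x)) cs) - \<phi> x\<bar> \<le> 2 * e"
proof -
  have Lpos: "L > 0" using L n Mg \<delta> by simp
  let ?h = "foldl max (-B0) (map (\<lambda>c. coneval (\<phi> c) (y0 n en c) (y0 n en x)) cs)"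
  have up: "?h \<le> \<phi> x + e"
  proof (rule foldl_max_le)
    show "- B0 \<le> \<phi> x + e" using phib[rule_format, OF x] B0 e by (simp add: abs_le_iff)
    show "\<forall>z\<in>set (map (\<lambda>c. coneval (\<phi> c) (y0 n en c) (y0 n en x)) cs). z \<le> \<phi> x + e"
    proof
      fix z assume "z \<in> set (map (\<lambda>c. coneval (\<phi> c) (y0 n en c) (y0 n en x)) cs)"
      then obtain c where c: "c \<in> set cs" "z = coneval (\<phi> c) (y0 n en c) (y0 n en x)" by auto
      have cK: "c \<in> K" using c cs by auto
      show "z \<le> \<phi> x + e"
      proof (cases "norm (x - c) < \<delta>")
        case True
        then have "\<bar>\<phi> c - \<phi> x\<bar> < e" using uc x cK by blast
        then show ?thesis using c cone_le[of "\<phi> c" "y0 n en c" "y0 n en x"] by (simp add: abs_less_iff)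
      next
        case False
        then obtain i where i: "i < 2*n" "\<bar>y0 n en x i - y0 n en c i\<bar> \<ge> \<delta> / (2 * real n)"
          using norm_lt_y0[OF en n \<delta>, of x c] by (meson not_le)
        have z1: "z \<le> \<phi> c - L * \<bar>y0 n en x i - y0 n en c i\<bar>"
          using c cone_le_i[where G="\<phi> c" and cv="y0 n en c" and y="y0 n en x" and i=i] i NI Lpos by simp
        have z2: "L * \<bar>y0 n en x i - y0 n en c i\<bar> \<ge> L * (\<delta> / (2 * real n))"
          using mult_left_mono[OF i(2), of L] Lpos by simp
        have z3: "L * (\<delta> / (2 * real n)) = 2 * Mg" using L \<delta> n by (simp add: field_simps)
        have "z \<le> \<phi> c - 2 * Mg" using z1 z2 z3 by linarith
        moreover have "\<bar>\<phi> c\<bar> \<le> Mg" "\<bar>\<phi> x\<bar> \<le> Mg" using phib x cK by auto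
        ultimately show ?thesis using e by (simp add: abs_le_iff)
      qed
    qed
  qed
  obtain c where c: "c \<in> set cs" "x \<in> ball c \<delta>2" using cs x by blast
  have cK: "c \<in> K" using c cs by auto
  have nxc: "norm (x - c) < \<delta>2" using c by (simp add: dist_norm norm_minus_commute)
  have "\<phi> c - L * norm (x - c) \<le> coneval (\<phi> c) (y0 n en c) (y0 n en x)"
  proof (rule cone_ge)
    show "0 \<le> L" using Lpos by simp
    show "0 \<le> norm (x - c)" by simp
    show "\<forall>i<NI. \<bar>y0 n en x i - y0 n en c i\<bar> \<le> norm (x - c)" using NI by (auto intro: y0_diff_le)
  qed
  moreover have "L * norm (x - c) \<le> e"
  proof -
    have "L * norm (x - c) \<le> L * (e / L)" using nxc \<delta>2 Lpos by (intro mult_left_mono) auto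
    then show ?thesis using Lpos by simp
  qed
  moreover have "\<phi> c > \<phi> x - e"
  proof -
    have "norm (x - c) < \<delta>" using nxc \<delta>2 by simp
    then have "\<bar>\<phi> c - \<phi> x\<bar> < e" using uc x cK by blast
    then show ?thesis by (simp add: abs_less_iff)
  qed
  moreover have "coneval (\<phi> c) (y0 n en c) (y0 n en x) \<le> ?h"
    using c by (intro foldl_max_ge_mem) auto
  ultimately have "?h \<ge> \<phi> x - 2 * e" by linarith
  then show ?thesis using up e by (simp add: abs_le_iff)
qed

end


theorem mainTheorem8:
  fixes b :: real
  assumes "b < 0"
  shows "universal (NN (modReLU b) (2 * CARD('n::finite) + 2 * CARD('m::finite) + 1)
           :: (complex^'n \<Rightarrow> complex^'m) set)"
  unfolding universal_def
proof (intro allI impI)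
  fix g :: "complex^'n \<Rightarrow> complex^'m" and K :: "(complex^'n) set" and \<epsilon> :: real
  assume gc: "continuous_on UNIV g" and Kc: "compact K" and e: "\<epsilon> > 0"
  define n where "n = CARD('n)"
  define m where "m = CARD('m)"
  define W where "W = 2 * n + 2 * m + 1"
  have Weq: "W = 2 * CARD('n) + 2 * CARD('m) + 1" unfolding W_def n_def m_def by simp
  define NI where "NI = 2 * n"
  define T where "T = 2 * n + 2 * m"
  have n0: "n > 0" unfolding n_def by simp
  have m0: "m > 0" unfolding m_def by simp
  have TW: "T < W" "NI \<le> T" "2 * n \<le> W" unfolding T_def W_def NI_def by auto
  show "\<exists>f\<in>(NN (modReLU b) (2 * CARD('n) + 2 * CARD('m) + 1) :: (complex^'n \<Rightarrow> complex^'m) set).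
          \<forall>z\<in>K. norm (f z - g z) < \<epsilon>"
  proof (cases "K = {}")
    case True
    have "out_affine W (\<lambda>_ _. 0) (\<lambda>_. 0) \<circ> act (modReLU b) \<circ> in_affine W (\<lambda>_ _. 0) (\<lambda>_. 0)
       \<in> (NN (modReLU b) W :: (complex^'n \<Rightarrow> complex^'m) set)"
      unfolding NN_def mem_Collect_eq
      by (rule exI[where x="\<lambda>_ _. 0"], rule exI[where x="\<lambda>_. 0"],
          rule exI[where x="in_affine W (\<lambda>_ _. 0) (\<lambda>_. 0)"]) (simp add: NN_pre.first)
    then show ?thesis using True unfolding Weq by (intro bexI) auto
  next
    case Kne: False
    have "\<exists>h. bij_betw h {0..<n} (UNIV::'n set)" unfolding n_def by (rule ex_bij_betw_nat_finite) simp
    then obtain en where en: "bij_betw en {0..<n} (UNIV::'n set)" by blast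
    have "\<exists>h. bij_betw h {0..<m} (UNIV::'m set)" unfolding m_def by (rule ex_bij_betw_nat_finite) simp
    then obtain em where em: "bij_betw em {0..<m} (UNIV::'m set)" by blast
    define im where "im = inv_into {0..<m} em"
    have im: "im k < m" "em (im k) = k" for k
    proof -
      have "k \<in> em ` {0..<m}" using em by (simp add: bij_betw_def)
      from inv_into_into[OF this] show "im k < m" unfolding im_def by simp
      show "em (im k) = k" unfolding im_def using bij_betw_inv_into_right[OF em, of k] by simp
    qed
    obtain R where R: "R > 0" "\<forall>x\<in>K. norm x \<le> R"
      using compact_imp_bounded[OF Kc] bounded_pos by blast
    have gK: "continuous_on K g" using continuous_on_subset[OF gc] by simp
    obtain Mg where Mg: "Mg > 0" "\<forall>y\<in>g ` K. norm y \<le> Mg"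
      using compact_imp_bounded[OF compact_continuous_image[OF gK Kc]] bounded_pos by blast
    define e' where "e' = \<epsilon> / (8 * m)"
    have e': "e' > 0" unfolding e'_def using e m0 by simp
    obtain \<delta> where \<delta>: "\<delta> > 0" "\<forall>x\<in>K. \<forall>x'\<in>K. dist x' x < \<delta> \<longrightarrow> dist (g x') (g x) < e'"
      using compact_uniformly_continuous[OF gK Kc] e' unfolding uniformly_continuous_on_def by metis
    define L where "L = 4 * real n * Mg / \<delta>"
    have L0: "L > 0" unfolding L_def using n0 Mg \<delta> by simp
    define \<delta>2 where "\<delta>2 = min \<delta> (e' / L)"
    have \<delta>2: "\<delta>2 > 0" "\<delta>2 \<le> \<delta>" "\<delta>2 \<le> e' / L" unfolding \<delta>2_def using \<delta> e' L0 by auto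
    obtain N where N: "finite N" "N \<subseteq> K" "K \<subseteq> (\<Union>c\<in>N. ball c \<delta>2)"
      using seq_compact_imp_totally_bounded[OF compact_imp_seq_compact[OF Kc]] \<delta>2(1) by metis
    obtain cs where cs: "set cs = N" using finite_list[OF N(1)] by blast
    define B0 where "B0 = Mg + 2 * L * R + R + 1"
    define B where "B = 2 * B0 + 1"
    define r where "r = -b"
    have LR: "L * R > 0" using L0 R by simp
    have B0: "B0 > 0" "B0 \<ge> Mg" "B0 \<ge> R" "B0 \<ge> Mg + 2 * L * R" unfolding B0_def using Mg(1) R(1) LR by auto
    interpret P: netprog b r B B0 W T K NI L
      by unfold_locales (use assms B0 TW Kne in \<open>auto simp: r_def B_def\<close>)
    define phi where "phi j x = (if even (j - NI) then Re (g x $ em ((j - NI) div 2)) else Im (g x $ em ((j - NI) div 2)))" for j x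
    define os where "os = map (\<lambda>k. NI + k) [0..<2*m]"
    define D where "D j = map (\<lambda>c. (phi j c, y0 n en c)) cs" for j
    define F where "F x = P.mrun (P.prog B0 os D) (y0 n en x)" for x
    have os: "distinct os" "\<forall>j\<in>set os. j \<noteq> T \<and> NI \<le> j \<and> j < W"
      unfolding os_def T_def NI_def W_def by (auto simp: distinct_map)
    have y0b: "\<bar>y0 n en x i\<bar> \<le> R" if "x \<in> K" for x i
    proof -
      have "\<bar>y0 n en x i\<bar> \<le> cmod (x $ en (i div 2))" unfolding y0_def
        by (auto simp: abs_Re_le_cmod abs_Im_le_cmod)
      also have "\<dots> \<le> norm x" by (rule Finite_Cartesian_Product.norm_nth_le)
      finally show ?thesis using R that by force
    qed
    have phib: "\<bar>phi j x\<bar> \<le> Mg" if "x \<in> K" for j x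
    proof -
      have "\<bar>phi j x\<bar> \<le> cmod (g x $ em ((j - NI) div 2))" unfolding phi_def
        by (auto simp: abs_Re_le_cmod abs_Im_le_cmod)
      also have "\<dots> \<le> norm (g x)" by (rule Finite_Cartesian_Product.norm_nth_le)
      finally show ?thesis using Mg that by force
    qed
    have phiuc: "\<forall>x\<in>K. \<forall>c\<in>K. norm (x - c) < \<delta> \<longrightarrow> \<bar>phi j c - phi j x\<bar> < e'" for j
    proof (intro ballI impI)
      fix x c assume xc: "x \<in> K" "c \<in> K" "norm (x - c) < \<delta>"
      then have "dist (g c) (g x) < e'" using \<delta>(2) by (simp add: dist_norm norm_minus_commute)
      moreover have "\<bar>phi j c - phi j x\<bar> \<le> cmod ((g c - g x) $ em ((j - NI) div 2))" unfolding phi_def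
        by (auto simp: abs_Re_le_cmod[of "g c $ _ - g x $ _", simplified] abs_Im_le_cmod[of "g c $ _ - g x $ _", simplified])
      moreover have "cmod ((g c - g x) $ em ((j - NI) div 2)) \<le> dist (g c) (g x)"
        unfolding dist_norm by (rule Finite_Cartesian_Product.norm_nth_le)
      ultimately show "\<bar>phi j c - phi j x\<bar> < e'" by linarith
    qed
    have ginit: "Good b W K (\<lambda>x. enc W B r {} (y0 n en x))"
    proof (rule good_init[OF assms r_def _ TW(3)])
      show "B > 0" using B0 unfolding B_def by simp
      show "R \<ge> 0" using R by simp
      show "\<forall>x\<in>K. \<forall>jj<n. cmod (x $ en jj) \<le> R"
        using R Finite_Cartesian_Product.norm_nth_le order_trans by blast
    qed
    have inv0: "P.inv (y0 n en x)" if "x \<in> K" for x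
      unfolding P.inv_def using y0b[OF that] B0(3) by (meson order_trans)
    have ok0: "P.ok_list (P.prog B0 os D) (y0 n en x)" if x: "x \<in> K" for x
    proof (rule P.prog_ok)
      show "\<forall>j\<in>set os. j \<noteq> T \<and> NI \<le> j \<and> j < W" using os by simp
      show "\<bar>B0\<bar> \<le> B0" using B0 by simp
      show "NI \<le> T" by (rule TW)
      show "\<forall>j\<in>set os. \<forall>d\<in>set (D j). \<bar>fst d\<bar> \<le> B0 \<and> (\<forall>i<NI. \<bar>fst d + L * snd d i - L * y0 n en x i\<bar> \<le> B0 \<and> \<bar>fst d - L * snd d i + L * y0 n en x i\<bar> \<le> B0)"
      proof (intro ballI conjI allI impI)
        fix j d assume "j \<in> set os" "d \<in> set (D j)"
        then obtain c where c: "c \<in> K" "d = (phi j c, y0 n en c)" unfolding D_def using cs N by auto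
        have pb: "\<bar>phi j c\<bar> \<le> Mg" by (rule phib[OF c(1)])
        then show "\<bar>fst d\<bar> \<le> B0" using c B0 by simp
        fix i
        have a1: "\<bar>L * y0 n en c i\<bar> \<le> L * R" using y0b[OF c(1), of i] L0 by (simp add: abs_mult)
        have a2: "\<bar>L * y0 n en x i\<bar> \<le> L * R" using y0b[OF x, of i] L0 by (simp add: abs_mult)
        show "\<bar>fst d + L * snd d i - L * y0 n en x i\<bar> \<le> B0" "\<bar>fst d - L * snd d i + L * y0 n en x i\<bar> \<le> B0"
          using c pb a1 a2 B0(4) by (simp_all add: abs_le_iff)
      qed
    qed
    have gm: "Good b W K (\<lambda>x. enc W B r {} (F x)) \<and> (\<forall>x\<in>K. P.inv (F x))"
      unfolding F_def by (rule P.good_mrun) (use ginit inv0 ok0 in auto)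
    define oR where "oR k = NI + 2 * im k" for k
    define oI where "oI k = NI + 2 * im k + 1" for k
    have o: "\<forall>k. oR k < W \<and> oI k < W \<and> oR k \<noteq> oI k"
    proof
      fix k
      have "im k < m" by (rule im(1))
      then show "oR k < W \<and> oI k < W \<and> oR k \<noteq> oI k" unfolding oR_def oI_def NI_def W_def by simp
    qed
    obtain f where f: "f \<in> (NN (modReLU b) W :: (complex^'n \<Rightarrow> complex^'m) set)"
      "\<forall>x\<in>K. norm (f x - out_affine W (\<lambda>k j. if j = oR k then 1 else if j = oI k then \<i> else 0)
           (\<lambda>k. - (of_real B + \<i> * of_real B)) (act (modReLU b) (enc W B r {} (F x)))) < \<epsilon> / 2"
      using good_out[OF assms conjunct1[OF gm] half_gt_zero[OF e],
          where A="\<lambda>k j. if j = oR k then 1 else if j = oI k then \<i> else 0"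
          and c="\<lambda>k. - (of_real B + \<i> * of_real B)"] by blast
    show ?thesis
    proof (intro bexI ballI)
      show "f \<in> (NN (modReLU b) (2 * CARD('n) + 2 * CARD('m) + 1) :: (complex^'n \<Rightarrow> complex^'m) set)"
        using f(1) unfolding Weq .
      fix x assume x: "x \<in> K"
      have Fb: "\<forall>k<W. \<bar>F x k\<bar> \<le> B" using gm x B0 unfolding P.inv_def B_def by force
      have outeq: "out_affine W (\<lambda>k j. if j = oR k then 1 else if j = oI k then \<i> else 0)
           (\<lambda>k. - (of_real B + \<i> * of_real B)) (act (modReLU b) (enc W B r {} (F x)))
           = (\<chi> k. Complex (F x (oR k)) (F x (oI k)))"
        by (rule out_exact[OF assms r_def _ Fb o]) (use B0 in \<open>simp add: B_def\<close>)
      have sem: "\<forall>j\<in>set os. F x j = foldl max (-B0) (map (\<lambda>c. P.coneval (phi j c) (y0 n en c) (y0 n en x)) cs)"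
      proof -
        have "\<forall>j\<in>set os. P.mrun (P.prog B0 os D) (y0 n en x) j = foldl max (-B0) (map (\<lambda>d. P.coneval (fst d) (snd d) (y0 n en x)) (D j))"
          by (rule P.prog_sem[OF os(1)]) (use os in auto)
        then show ?thesis unfolding F_def D_def by (simp add: comp_def)
      qed
      have appr: "\<bar>F x j - phi j x\<bar> \<le> 2 * e'" if "j \<in> set os" for j
      proof -
        have "\<bar>foldl max (-B0) (map (\<lambda>c. P.coneval (phi j c) (y0 n en c) (y0 n en x)) cs) - phi j x\<bar> \<le> 2 * e'"
        proof (rule P.cone_approx[OF en n0 _ \<delta>(1) e' Mg(1) L_def \<delta>2(2) \<delta>2(3)])
          show "NI = 2 * n" by (simp add: NI_def)
          show "\<forall>x\<in>K. \<bar>phi j x\<bar> \<le> Mg" using phib by blast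
          show "Mg \<le> B0" using B0 by simp
          show "\<forall>x\<in>K. \<forall>c\<in>K. norm (x - c) < \<delta> \<longrightarrow> \<bar>phi j c - phi j x\<bar> < e'" by (rule phiuc)
          show "set cs \<subseteq> K" "K \<subseteq> (\<Union>c\<in>set cs. ball c \<delta>2)" using cs N by auto
          show "x \<in> K" by (rule x)
        qed
        then show ?thesis using sem that by simp
      qed
      have comp: "cmod (Complex (F x (oR k)) (F x (oI k)) - g x $ k) \<le> 4 * e'" for k
      proof -
        have inos: "oR k \<in> set os" "oI k \<in> set os" using im(1)[of k] unfolding os_def oR_def oI_def by auto
        have "phi (oR k) x = Re (g x $ k)" unfolding phi_def oR_def using im by simp
        moreover have "phi (oI k) x = Im (g x $ k)" unfolding phi_def oI_def using im by simp
        ultimately have "\<bar>F x (oR k) - Re (g x $ k)\<bar> \<le> 2 * e'" "\<bar>F x (oI k) - Im (g x $ k)\<bar> \<le> 2 * e'"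
          using appr[OF inos(1)] appr[OF inos(2)] by simp_all
        then show ?thesis using cmod_le[of "Complex (F x (oR k)) (F x (oI k)) - g x $ k"] by simp
      qed
      have "norm ((\<chi> k. Complex (F x (oR k)) (F x (oI k))) - g x) \<le> (\<Sum>k\<in>UNIV. cmod (((\<chi> k. Complex (F x (oR k)) (F x (oI k))) - g x) $ k))"
        by (rule vec_norm_le_sum)
      also have "\<dots> \<le> (\<Sum>k\<in>(UNIV::'m set). 4 * e')" by (rule sum_mono) (simp add: comp)
      also have "\<dots> = \<epsilon> / 2" unfolding e'_def m_def using m0 by (simp add: m_def)
      finally have "norm ((\<chi> k. Complex (F x (oR k)) (F x (oI k))) - g x) \<le> \<epsilon> / 2" .
      moreover have "norm (f x - (\<chi> k. Complex (F x (oR k)) (F x (oI k)))) < \<epsilon> / 2"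
        using bspec[OF f(2) x] unfolding outeq .
      ultimately show "norm (f x - g x) < \<epsilon>"
        using norm_triangle_ineq[of "f x - (\<chi> k. Complex (F x (oR k)) (F x (oI k)))" "(\<chi> k. Complex (F x (oR k)) (F x (oI k))) - g x"]
        by simp
    qed
  qed
qed


end
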